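(* We have $$\{g\in G(A(\!(t)\!))\mid r(g)\le 0\}=\{g\in G(A(\!(t)\!))\mid g^{-1}\,g(\lambda t)\in G(A[\lambda,\lambda^{-1}][[t]])\},$$ where $g(\lambda t)$ is the image of $g$ under $A(\!(t)\!)\to A[\lambda,\lambda^{-1}](\!(t)\!)$, $t\mapsto\lambda t$.
   Context: Let $A$ be a commutative ring, $A[[t]]$ the power series ring and $A(\!(t)\!)=A[[t]][t^{-1}]$. For $n\ge1$ put $A[[t^{1/n}]]=A[[t]][y]/(y^n-t)$ and $A(\!(t^{1/n})\!)=A[[t^{1/n}]][t^{-1}]$. Let $A^u=A[u]$ be a polynomial ring. Every $r\in\mathbb{Q}_{\ge0}$ is written $r=m/n$ with $\gcd(m,n)=1$, $n\ge1$. Put $A_r=A^u[[t^{1/n}]]$ and $\mathcal{A}_r=A^u(\!(t^{1/n})\!)$. For $r\in\mathbb{Q}_{>0}$, let $\sigma_r:A(\!(t)\!)\to\mathcal{A}_r$ be the $t$-adically continuous $A$-algebra homomorphism with $t\mapsto t(1+ut^r)$. $\lambda$ is an indeterminate. Let $G$ be an affine $A$-group scheme with a closed embedding $G\hookrightarrow\mathrm{SL}_{N,A}$. For a ring map $\sigma$, $\sigma(g)$ denotes the image of $g$ under $G(\sigma)$. Index: if $g\in G(A[[t]])$, set $r(g)=-1$. Otherwise $r(g)\in\mathbb{Q}_{\ge0}$ is the infimum in $\mathbb{R}$ of $\{r\in\mathbb{Q}_{>0}\mid g^{-1}\sigma_r(g)\in G(A_r)\}$. *)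

theory Defs
  imports "Jordan_Normal_Form.Determinant"
          "HOL-Library.Poly_Mapping"
          "HOL-Library.Extended_Real"
          "HOL-Computational_Algebra.Formal_Laurent_Series"
          "HOL-Computational_Algebra.Polynomial"
begin

no_notation fls_nth (infixl \<open>$$\<close> 75)

type_synonym 'a mpoly = "(nat \<Rightarrow>\<^sub>0 nat) \<Rightarrow>\<^sub>0 'a"

text \<open>Evaluation of a polynomial with coefficients in A at a point of an A-algebra B,
  the A-algebra structure being given by phi.\<close>
definition mpoly_eval :: "('a::comm_ring_1 \<Rightarrow> 'b::comm_ring_1) \<Rightarrow> (nat \<Rightarrow> 'b) \<Rightarrow> 'a mpoly \<Rightarrow> 'b" where
  "mpoly_eval phi x p =
     (\<Sum>m\<in>Poly_Mapping.keys p. phi (Poly_Mapping.lookup p m) *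
        (\<Prod>i\<in>Poly_Mapping.keys m. x i ^ Poly_Mapping.lookup m i))"

definition mpoly_vars :: "'a::zero mpoly \<Rightarrow> nat set" where
  "mpoly_vars p = \<Union> (Poly_Mapping.keys ` Poly_Mapping.keys p)"

definition mvar :: "nat \<Rightarrow> 'a::comm_ring_1 mpoly" where
  "mvar k = Poly_Mapping.single (Poly_Mapping.single k 1) 1"

definition mconst :: "'a::comm_ring_1 \<Rightarrow> 'a mpoly" where
  "mconst c = Poly_Mapping.single 0 c"

definition ideal_gen :: "'b::comm_ring_1 set \<Rightarrow> 'b set" where
  "ideal_gen B = {x. \<exists>F c. finite F \<and> F \<subseteq> B \<and> x = (\<Sum>g\<in>F. c g * g)}"

text \<open>The entries of an N x N matrix as coordinates: variable i*N+j is entry (i,j).\<close>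
definition mat_coords :: "nat \<Rightarrow> 'b::zero mat \<Rightarrow> nat \<Rightarrow> 'b" where
  "mat_coords N M k = (if k < N * N then index_mat M (k div N, k mod N) else 0)"

text \<open>G is the closed subscheme of SL_N cut out by the polynomials I.  For an A-algebra B
  (structure map phi) and a subring S of B (S = UNIV for B itself), this is G(S).\<close>
definition group_points ::
  "nat \<Rightarrow> 'a::comm_ring_1 mpoly set \<Rightarrow> ('a \<Rightarrow> 'b::comm_ring_1) \<Rightarrow> 'b set \<Rightarrow> 'b mat set" where
  "group_points N I phi S =
     {M \<in> carrier_mat N N. (\<forall>i<N. \<forall>j<N. index_mat M (i, j) \<in> S) \<and> det M = 1 \<and>
        (\<forall>f\<in>I. mpoly_eval phi (mat_coords N M) f = 0)}"

definition genX :: "nat \<Rightarrow> 'a::comm_ring_1 mpoly mat" where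
  "genX N = mat N N (\<lambda>(i, j). mvar (i * N + j))"

definition genY :: "nat \<Rightarrow> 'a::comm_ring_1 mpoly mat" where
  "genY N = mat N N (\<lambda>(i, j). mvar (N * N + i * N + j))"

text \<open>I defines a closed subgroup scheme of SL_{N,A}: the coordinate ideal (I, det X - 1) is
  a Hopf ideal, i.e. unit, multiplication and inversion of SL_N restrict to G.\<close>
definition closed_subgroup_scheme_SL :: "nat \<Rightarrow> 'a::comm_ring_1 mpoly set \<Rightarrow> bool" where
  "closed_subgroup_scheme_SL N I \<longleftrightarrow>
     (\<forall>f\<in>I. mpoly_vars f \<subseteq> {..<N * N}) \<and>
     (let X = genX N; Y = genY N;
          eqX = (\<lambda>f. mpoly_eval mconst (mat_coords N X) f) ` I \<union> {det X - 1};
          eqY = (\<lambda>f. mpoly_eval mconst (mat_coords N Y) f) ` I \<union> {det Y - 1}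
      in (\<forall>f\<in>I. mpoly_eval id (mat_coords N (1\<^sub>m N)) f = 0) \<and>
         (\<forall>f\<in>I. mpoly_eval mconst (mat_coords N (X * Y)) f \<in> ideal_gen (eqX \<union> eqY)) \<and>
         (\<forall>f\<in>I. mpoly_eval mconst (mat_coords N (adj_mat X)) f \<in> ideal_gen eqX))"

text \<open>A[[t]] inside A((t)); likewise A^u[[t^{1/n}]] inside A^u((t^{1/n})) (variable s = t^{1/n}).\<close>
definition fls_integral_part :: "'b::zero fls set" where
  "fls_integral_part = {x. \<forall>k<0. fls_nth x k = 0}"

text \<open>A[lambda,lambda^{-1}][[t]] inside A((lambda))((t)).\<close>
definition laurent_poly_power_series :: "'a::zero fls fls set" where
  "laurent_poly_power_series =
     {y. (\<forall>k<0. fls_nth y k = 0) \<and> (\<forall>k. finite {i. fls_nth (fls_nth y k) i \<noteq> 0})}"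

text \<open>(1 + u s^m)^k in A[u][[s]] for k an integer (for k < 0 via the geometric series).\<close>
definition sigma_w :: "nat \<Rightarrow> int \<Rightarrow> 'a::comm_ring_1 poly fps" where
  "sigma_w m k =
     (if k \<ge> 0 then (1 + fps_const [:0, 1:] * fps_X ^ m) ^ nat k
      else Abs_fps (\<lambda>j. if m dvd j then (- [:0, 1:]) ^ (j div m) else 0) ^ nat (- k))"

text \<open>sigma_r : A((t)) -> A^u((t^{1/n})), the continuous A-algebra map t |-> t(1 + u t^r),
  r = m/n in lowest terms; with s = t^{1/n}: t |-> s^n (1 + u s^m).\<close>
definition sigma_r :: "rat \<Rightarrow> 'a::comm_ring_1 fls \<Rightarrow> 'a poly fls" where
  "sigma_r r x = (case quotient_of r of (m, n) \<Rightarrow>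
     Abs_fls (\<lambda>e. \<Sum>k\<in>{fls_subdegree x .. e div n}.
        [:fls_nth x k:] * fps_nth (sigma_w (nat m) k) (nat (e - n * k))))"

text \<open>t |-> lambda t : A((t)) -> A[lambda,lambda^{-1}]((t)) (inside A((lambda))((t))).\<close>
definition lambda_subst :: "'a::comm_ring_1 fls \<Rightarrow> 'a fls fls" where
  "lambda_subst x = Abs_fls (\<lambda>k. fls_shift (- k) (fls_const (fls_nth x k)))"

text \<open>The inclusion A((t)) -> A^u((t^{1/n})), t |-> s^n (n = denominator of r).\<close>
definition incl_r :: "rat \<Rightarrow> 'a::comm_ring_1 fls \<Rightarrow> 'a poly fls" where
  "incl_r r x = (case quotient_of r of (m, n) \<Rightarrow>
     Abs_fls (\<lambda>e. if n dvd e then [:fls_nth x (e div n):] else 0))"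

text \<open>The inclusion A((t)) -> A[lambda,lambda^{-1}]((t)) (coefficientwise).\<close>
definition incl_lambda :: "'a::comm_ring_1 fls \<Rightarrow> 'a fls fls" where
  "incl_lambda x = Abs_fls (\<lambda>k. fls_const (fls_nth x k))"

text \<open>The inverse of g in SL_N is its adjugate.  The infimum is taken in the extended reals
  (the infimum of the empty set being +infinity).\<close>
definition r_index :: "nat \<Rightarrow> 'a::comm_ring_1 mpoly set \<Rightarrow> 'a fls mat \<Rightarrow> ereal" where
  "r_index N I g =
     (if g \<in> group_points N I fls_const fls_integral_part then -1
      else Inf ((\<lambda>r. ereal (real_of_rat r)) `
        {r::rat. 0 < r \<and>
           map_mat (incl_r r) (adj_mat g) * map_mat (sigma_r r) g
             \<in> group_points N I (\<lambda>a. fls_const [:a:]) fls_integral_part}))"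

end

theory Submission
  imports Defs
begin


definition mono_eval :: "(nat \<Rightarrow> 'b::comm_ring_1) \<Rightarrow> (nat \<Rightarrow>\<^sub>0 nat) \<Rightarrow> 'b" where
  "mono_eval x m = (\<Prod>i\<in>Poly_Mapping.keys m. x i ^ Poly_Mapping.lookup m i)"

lemma mono_eval_superset:
  assumes "finite S" "Poly_Mapping.keys m \<subseteq> S"
  shows "mono_eval x m = (\<Prod>i\<in>S. x i ^ Poly_Mapping.lookup m i)"
  unfolding mono_eval_def
  by (rule prod.mono_neutral_left[OF assms(1,2)]) (auto simp: in_keys_iff)

lemma mono_eval_add: "mono_eval x (m1 + m2) = mono_eval x m1 * mono_eval x m2"
proof -
  let ?S = "Poly_Mapping.keys m1 \<union> Poly_Mapping.keys m2"
  have f: "finite ?S" by simp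
  have "mono_eval x (m1 + m2) = (\<Prod>i\<in>?S. x i ^ Poly_Mapping.lookup (m1+m2) i)"
    by (rule mono_eval_superset[OF f]) (rule keys_add)
  also have "\<dots> = (\<Prod>i\<in>?S. x i ^ Poly_Mapping.lookup m1 i) * (\<Prod>i\<in>?S. x i ^ Poly_Mapping.lookup m2 i)"
    by (simp add: lookup_add power_add prod.distrib)
  also have "\<dots> = mono_eval x m1 * mono_eval x m2"
    by (simp add: mono_eval_superset[OF f])
  finally show ?thesis .
qed

lemma mono_eval_zero[simp]: "mono_eval x 0 = 1"
  by (simp add: mono_eval_def)

lemma mpoly_eval_alt: "mpoly_eval phi x p = (\<Sum>m\<in>Poly_Mapping.keys p. phi (Poly_Mapping.lookup p m) * mono_eval x m)"
  by (simp add: mpoly_eval_def mono_eval_def)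

lemma mpoly_eval_superset:
  assumes "finite S" "Poly_Mapping.keys p \<subseteq> S" "phi 0 = 0"
  shows "mpoly_eval phi x p = (\<Sum>m\<in>S. phi (Poly_Mapping.lookup p m) * mono_eval x m)"
  unfolding mpoly_eval_alt
  by (rule sum.mono_neutral_left[OF assms(1,2)]) (auto simp: in_keys_iff assms(3))

lemma mpoly_eval_add:
  assumes "comm_ring_hom phi"
  shows "mpoly_eval phi x (p + q) = mpoly_eval phi x p + mpoly_eval phi x q"
proof -
  interpret comm_ring_hom phi by fact
  let ?S = "Poly_Mapping.keys p \<union> Poly_Mapping.keys q"
  have f: "finite ?S" by simp
  show ?thesis
    by (simp add: mpoly_eval_superset[OF f] keys_add lookup_add hom_add sum.distrib distrib_right)
qed

lemma mpoly_eval_zero[simp]: "mpoly_eval phi x 0 = 0"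
  by (simp add: mpoly_eval_def)

lemma mpoly_eval_sum:
  assumes "comm_ring_hom phi"
  shows "mpoly_eval phi x (sum f A) = (\<Sum>a\<in>A. mpoly_eval phi x (f a))"
  by (induction A rule: infinite_finite_induct) (auto simp: mpoly_eval_add[OF assms])

lemma mpoly_eval_single:
  assumes "comm_ring_hom phi"
  shows "mpoly_eval phi x (Poly_Mapping.single m c) = phi c * mono_eval x m"
proof -
  interpret comm_ring_hom phi by fact
  show ?thesis by (simp add: mpoly_eval_alt)
qed

lemma poly_mapping_sum_singles:
  "p = (\<Sum>m\<in>Poly_Mapping.keys p. Poly_Mapping.single m (Poly_Mapping.lookup p m))"
  by (rule poly_mapping_eqI) (simp add: lookup_sum lookup_single when_def in_keys_iff)

lemma mpoly_eval_mult:
  assumes "comm_ring_hom phi"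
  shows "mpoly_eval phi x (p * q) = mpoly_eval phi x p * mpoly_eval phi x q"
proof -
  interpret comm_ring_hom phi by fact
  let ?P = "Poly_Mapping.keys p" and ?Q = "Poly_Mapping.keys q"
  have "p * q = (\<Sum>a\<in>?P. Poly_Mapping.single a (Poly_Mapping.lookup p a)) * (\<Sum>b\<in>?Q. Poly_Mapping.single b (Poly_Mapping.lookup q b))"
    by (simp flip: poly_mapping_sum_singles)
  also have "\<dots> = (\<Sum>a\<in>?P. \<Sum>b\<in>?Q. Poly_Mapping.single (a+b) (Poly_Mapping.lookup p a * Poly_Mapping.lookup q b))"
    by (simp add: sum_distrib_left sum_distrib_right mult_single sum.swap[of _ ?Q])
  finally have "mpoly_eval phi x (p*q) = (\<Sum>a\<in>?P. \<Sum>b\<in>?Q. phi (Poly_Mapping.lookup p a) * mono_eval x a * (phi (Poly_Mapping.lookup q b) * mono_eval x b))"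
    by (simp add: mpoly_eval_sum[OF assms] mpoly_eval_single[OF assms] mono_eval_add hom_mult mult_ac)
  also have "\<dots> = mpoly_eval phi x p * mpoly_eval phi x q"
    by (simp add: mpoly_eval_alt sum_distrib_left sum_distrib_right sum.swap[of _ ?Q])
  finally show ?thesis .
qed

lemma mpoly_eval_one:
  assumes "comm_ring_hom phi"
  shows "mpoly_eval phi x 1 = 1"
proof -
  interpret comm_ring_hom phi by fact
  have "(1::'a mpoly) = Poly_Mapping.single 0 1" by simp
  then show ?thesis using mpoly_eval_single[OF assms, of x 0 1] by simp
qed

lemma mpoly_eval_hom:
  assumes "comm_ring_hom phi"
  shows "comm_ring_hom (mpoly_eval phi x)"
  by unfold_locales (auto simp: mpoly_eval_add[OF assms] mpoly_eval_mult[OF assms] mpoly_eval_one[OF assms])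

lemma mpoly_eval_mvar:
  assumes "comm_ring_hom phi"
  shows "mpoly_eval phi x (mvar k) = x k"
proof -
  interpret comm_ring_hom phi by fact
  show ?thesis by (simp add: mvar_def mpoly_eval_single[OF assms] mono_eval_def)
qed

lemma mpoly_eval_mconst:
  assumes "comm_ring_hom phi"
  shows "mpoly_eval phi x (mconst c) = phi c"
proof -
  interpret comm_ring_hom phi by fact
  show ?thesis by (simp add: mconst_def mpoly_eval_single[OF assms])
qed

lemma comm_ring_hom_mconst: "comm_ring_hom (mconst :: 'a::comm_ring_1 \<Rightarrow> 'a mpoly)"
  by unfold_locales (auto simp: mconst_def single_add mult_single)

lemma mpoly_eval_compose:
  assumes "comm_ring_hom phi"
  shows "mpoly_eval phi y (mpoly_eval mconst x f) = mpoly_eval phi (\<lambda>i. mpoly_eval phi y (x i)) f"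
proof -
  interpret E: comm_ring_hom "mpoly_eval phi y" by (rule mpoly_eval_hom[OF assms])
  have "mpoly_eval phi y (mpoly_eval mconst x f) = mpoly_eval phi y (\<Sum>m\<in>Poly_Mapping.keys f. mconst (Poly_Mapping.lookup f m) * (\<Prod>i\<in>Poly_Mapping.keys m. x i ^ Poly_Mapping.lookup m i))"
    by (simp only: mpoly_eval_def[of mconst x f])
  also have "\<dots> = (\<Sum>m\<in>Poly_Mapping.keys f. phi (Poly_Mapping.lookup f m) * (\<Prod>i\<in>Poly_Mapping.keys m. mpoly_eval phi y (x i) ^ Poly_Mapping.lookup m i))"
    by (simp only: E.hom_sum E.hom_mult E.hom_prod E.hom_power mpoly_eval_mconst[OF assms])
  also have "\<dots> = mpoly_eval phi (\<lambda>i. mpoly_eval phi y (x i)) f"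
    by (simp only: mpoly_eval_def[of phi _ f])
  finally show ?thesis .
qed

lemma mpoly_eval_map:
  assumes "comm_ring_hom psi"
  shows "psi (mpoly_eval phi x f) = mpoly_eval (psi \<circ> phi) (psi \<circ> x) f"
proof -
  interpret comm_ring_hom psi by fact
  show ?thesis unfolding mpoly_eval_def by (simp add: hom_sum hom_mult hom_prod hom_power)
qed


lemma (in comm_ring_hom) hom_mat_delete:
  "mat_delete (map_mat hom A) i j = map_mat hom (mat_delete A i j)"
  by (rule eq_matI) (auto simp: mat_delete_def)

lemma (in comm_ring_hom) hom_cofactor:
  "cofactor (map_mat hom A) i j = hom (cofactor A i j)"
  by (simp add: cofactor_def hom_mat_delete hom_mult hom_power hom_uminus)

lemma (in comm_ring_hom) hom_adj_mat:
  "adj_mat (map_mat hom A) = map_mat hom (adj_mat A)"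
  by (rule eq_matI) (auto simp: adj_mat_def hom_cofactor)

lemma mat_coords_map:
  assumes "psi 0 = 0" "M \<in> carrier_mat N N"
  shows "mat_coords N (map_mat psi M) = psi \<circ> mat_coords N M"
proof
  fix k
  show "mat_coords N (map_mat psi M) k = (psi \<circ> mat_coords N M) k"
  proof (cases "k < N*N")
    case True
    then have "k div N < N" "k mod N < N" using assms(2)
      by (auto simp: less_mult_imp_div_less) (metis mod_less_divisor mult_0_right neq0_conv not_less_zero)
    then show ?thesis using True assms by (auto simp: mat_coords_def)
  qed (auto simp: mat_coords_def assms)
qed

lemma group_points_map:
  assumes h: "comm_ring_hom psi" and M: "M \<in> group_points N I phi UNIV"
    and phi': "\<And>a. phi' a = psi (phi a)"
  shows "map_mat psi M \<in> group_points N I phi' UNIV"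
proof -
  interpret comm_ring_hom psi by fact
  have phi'': "phi' = psi \<circ> phi" using phi' by auto
  from M show ?thesis
    by (auto simp: group_points_def mpoly_eval_map[OF h, symmetric] mat_coords_map phi'' hom_det[symmetric])
qed

lemma index_mult_lt: "i < N \<Longrightarrow> j < N \<Longrightarrow> i * N + j < N * (N::nat)"
proof -
  assume a: "i < N" "j < N"
  have "i * N + j < i * N + N" using a by simp
  also have "\<dots> = (i+1) * N" by simp
  also have "\<dots> \<le> N * N" using a by (intro mult_right_mono) auto
  finally show ?thesis .
qed

lemma ev_genX:
  assumes h: "comm_ring_hom phi" and y: "\<And>k. k < N*N \<Longrightarrow> y k = mat_coords N M k"
    and M: "M \<in> carrier_mat N N"
  shows "map_mat (mpoly_eval phi y) (genX N) = M"
  using M by (intro eq_matI) (auto simp: genX_def mpoly_eval_mvar[OF h] y index_mult_lt mat_coords_def)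

lemma ev_genY:
  assumes h: "comm_ring_hom phi" and y: "\<And>k. k < N*N \<Longrightarrow> y (N*N + k) = mat_coords N M k"
    and M: "M \<in> carrier_mat N N"
  shows "map_mat (mpoly_eval phi y) (genY N) = M"
  using M by (intro eq_matI) (auto simp: genY_def mpoly_eval_mvar[OF h] y index_mult_lt mat_coords_def
     add.assoc)

lemma ev_mat_coords:
  assumes h: "comm_ring_hom phi" and X: "X \<in> carrier_mat N N"
  shows "(\<lambda>k. mpoly_eval phi y (mat_coords N X k)) = mat_coords N (map_mat (mpoly_eval phi y) X)"
  using mat_coords_map[of "mpoly_eval phi y" X N] X by (auto simp: comp_def)

lemma ideal_gen_zero:
  assumes h: "comm_ring_hom ev" and x: "x \<in> ideal_gen B" and B: "\<And>b. b \<in> B \<Longrightarrow> ev b = 0"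
  shows "ev x = 0"
proof -
  interpret comm_ring_hom ev by fact
  from x obtain F c where "finite F" "F \<subseteq> B" "x = (\<Sum>g\<in>F. c g * g)" by (auto simp: ideal_gen_def)
  then show ?thesis using B by (auto simp: hom_sum hom_mult intro!: sum.neutral)
qed

lemma eval_eq_zero_of_points:
  assumes h: "comm_ring_hom phi" and f: "f \<in> I" and M: "M \<in> group_points N I phi UNIV"
    and X: "X \<in> carrier_mat N N" and Xm: "map_mat (mpoly_eval phi y) X = M"
  shows "mpoly_eval phi y (mpoly_eval mconst (mat_coords N X) f) = 0"
proof -
  have "mpoly_eval phi y (mpoly_eval mconst (mat_coords N X) f)
     = mpoly_eval phi (mat_coords N M) f"
    by (simp add: mpoly_eval_compose[OF h] ev_mat_coords[OF h X] Xm)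
  also have "\<dots> = 0" using M f by (auto simp: group_points_def)
  finally show ?thesis .
qed

lemma genX_carrier: "genX N \<in> carrier_mat N N" by (simp add: genX_def)
lemma genY_carrier: "genY N \<in> carrier_mat N N" by (simp add: genY_def)

lemma group_points_mult:
  assumes G: "closed_subgroup_scheme_SL N I" and h: "comm_ring_hom phi"
    and M: "M \<in> group_points N I phi UNIV" and M': "M' \<in> group_points N I phi UNIV"
  shows "M * M' \<in> group_points N I phi UNIV"
proof -
  define y where "y k = (if k < N*N then mat_coords N M k else mat_coords N M' (k - N*N))" for k
  define ev where "ev = mpoly_eval phi y"
  interpret E: comm_ring_hom ev unfolding ev_def by (rule mpoly_eval_hom[OF h])
  have Mc: "M \<in> carrier_mat N N" and M'c: "M' \<in> carrier_mat N N" using M M' by (auto simp: group_points_def)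
  have eX: "map_mat ev (genX N) = M" unfolding ev_def by (rule ev_genX[OF h _ Mc]) (simp add: y_def)
  have eY: "map_mat ev (genY N) = M'" unfolding ev_def by (rule ev_genY[OF h _ M'c]) (simp add: y_def)
  have eXY: "map_mat ev (genX N * genY N) = M * M'"
    using E.mat_hom_mult[OF genX_carrier genY_carrier] eX eY by simp
  have det: "det (M * M') = 1" using M M' Mc M'c by (simp add: det_mult[OF Mc M'c] group_points_def)
  have eqs: "mpoly_eval phi (mat_coords N (M * M')) f = 0" if f: "f \<in> I" for f
  proof -
    let ?X = "genX N" and ?Y = "genY N"
    let ?eqX = "(\<lambda>f. mpoly_eval mconst (mat_coords N ?X) f) ` I \<union> {det ?X - 1}"
    let ?eqY = "(\<lambda>f. mpoly_eval mconst (mat_coords N ?Y) f) ` I \<union> {det ?Y - 1}"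
    from G f have mem: "mpoly_eval mconst (mat_coords N (?X * ?Y)) f \<in> ideal_gen (?eqX \<union> ?eqY)"
      by (simp add: closed_subgroup_scheme_SL_def Let_def)
    have "ev b = 0" if "b \<in> ?eqX \<union> ?eqY" for b
    proof -
      from that consider (a) f' where "f' \<in> I" "b = mpoly_eval mconst (mat_coords N ?X) f'"
        | (b) "b = det ?X - 1" | (c) f' where "f' \<in> I" "b = mpoly_eval mconst (mat_coords N ?Y) f'"
        | (d) "b = det ?Y - 1" by blast
      then show ?thesis
      proof cases
        case a then show ?thesis using eval_eq_zero_of_points[OF h a(1) M genX_carrier] eX unfolding ev_def by simp
      next
        case c then show ?thesis using eval_eq_zero_of_points[OF h c(1) M' genY_carrier] eY unfolding ev_def by simp
      next
        case b then show ?thesis using E.hom_det[of ?X] eX M by (simp add: E.hom_minus group_points_def)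
      next
        case d then show ?thesis using E.hom_det[of ?Y] eY M' by (simp add: E.hom_minus group_points_def)
      qed
    qed
    then have "ev (mpoly_eval mconst (mat_coords N (?X * ?Y)) f) = 0"
      by (intro ideal_gen_zero[OF E.comm_ring_hom_axioms mem]) 
    then show ?thesis unfolding ev_def
      using ev_mat_coords[OF h mult_carrier_mat[OF genX_carrier genY_carrier], of y]
      by (simp add: mpoly_eval_compose[OF h] eXY[unfolded ev_def])
  qed
  show ?thesis using Mc M'c det eqs by (auto simp: group_points_def)
qed

lemma group_points_adj:
  assumes G: "closed_subgroup_scheme_SL N I" and h: "comm_ring_hom phi"
    and M: "M \<in> group_points N I phi UNIV"
  shows "adj_mat M \<in> group_points N I phi UNIV"
proof -
  define ev where "ev = mpoly_eval phi (mat_coords N M)"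
  interpret E: comm_ring_hom ev unfolding ev_def by (rule mpoly_eval_hom[OF h])
  have Mc: "M \<in> carrier_mat N N" and dM: "det M = 1" using M by (auto simp: group_points_def)
  have eX: "map_mat ev (genX N) = M" unfolding ev_def by (rule ev_genX[OF h _ Mc]) simp
  have aC: "adj_mat M \<in> carrier_mat N N" using adj_mat[OF Mc] by simp
  have "det (M * adj_mat M) = 1" using adj_mat(2)[OF Mc] dM by simp
  then have det: "det (adj_mat M) = 1" using det_mult[OF Mc aC] dM by simp
  have eqs: "mpoly_eval phi (mat_coords N (adj_mat M)) f = 0" if f: "f \<in> I" for f
  proof -
    let ?X = "genX N"
    let ?eqX = "(\<lambda>f. mpoly_eval mconst (mat_coords N ?X) f) ` I \<union> {det ?X - 1}"
    from G f have mem: "mpoly_eval mconst (mat_coords N (adj_mat ?X)) f \<in> ideal_gen ?eqX"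
      by (simp add: closed_subgroup_scheme_SL_def Let_def)
    have "ev b = 0" if "b \<in> ?eqX" for b
    proof -
      from that consider (a) f' where "f' \<in> I" "b = mpoly_eval mconst (mat_coords N ?X) f'"
        | (b) "b = det ?X - 1" by blast
      then show ?thesis
      proof cases
        case a then show ?thesis using eval_eq_zero_of_points[OF h a(1) M genX_carrier] eX unfolding ev_def by simp
      next
        case b then show ?thesis using E.hom_det[of ?X] eX dM by (simp add: E.hom_minus)
      qed
    qed
    then have "ev (mpoly_eval mconst (mat_coords N (adj_mat ?X)) f) = 0"
      by (intro ideal_gen_zero[OF E.comm_ring_hom_axioms mem])
    then show ?thesis unfolding ev_def
      using ev_mat_coords[OF h adj_mat(1)[OF genX_carrier], of "mat_coords N M"] E.hom_adj_mat[of "genX N", symmetric]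
      by (simp add: mpoly_eval_compose[OF h] eX[unfolded ev_def] ev_def)
  qed
  show ?thesis using aC det eqs by (auto simp: group_points_def)
qed

lemma group_points_subring:
  "M \<in> group_points N I phi S \<longleftrightarrow> M \<in> group_points N I phi UNIV \<and> (\<forall>i<N. \<forall>j<N. M $$ (i,j) \<in> S)"
  by (auto simp: group_points_def)


lemma sum_int_interval_eq:
  fixes f :: "int \<Rightarrow> 'b::comm_monoid_add"
  assumes "\<And>k. f k \<noteq> 0 \<Longrightarrow> a \<le> k \<and> k \<le> b" "L \<le> a" "b \<le> U" "L' \<le> a" "b \<le> U'"
  shows "sum f {L..U} = sum f {L'..U'}"
proof -
  have z: "\<And>k. k \<notin> {a..b} \<Longrightarrow> f k = 0" using assms(1) by (meson atLeastAtMost_iff)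
  have "sum f {L..U} = sum f {a..b}"
    by (rule sum.mono_neutral_right) (use assms z in auto)
  also have "\<dots> = sum f {L'..U'}"
    by (rule sum.mono_neutral_left) (use assms z in auto)
  finally show ?thesis .
qed

lemma sum_int_shift:
  fixes f :: "int \<Rightarrow> 'b::comm_monoid_add"
  shows "sum f {L..U} = (\<Sum>k\<in>{L+c..U+c}. f (k - c))"
  by (rule sum.reindex_bij_witness[of _ "\<lambda>k. k - c" "\<lambda>k. k + c"]) auto


definition cf :: "'b::comm_ring_1 fps \<Rightarrow> int \<Rightarrow> 'b" where
  "cf A d = (if 0 \<le> d then fps_nth A (nat d) else 0)"

lemma cf_neg[simp]: "d < 0 \<Longrightarrow> cf A d = 0" by (simp add: cf_def)

lemma cf_mult:
  assumes "L \<le> 0" "D \<le> U"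
  shows "cf (A * B) D = (\<Sum>d\<in>{L..U}. cf A d * cf B (D - d))"
proof (cases "D < 0")
  case True
  then show ?thesis by (auto simp: cf_def intro!: sum.neutral)
next
  case False
  have "(\<Sum>d\<in>{L..U}. cf A d * cf B (D - d)) = (\<Sum>d\<in>{0..D}. cf A d * cf B (D - d))"
    by (rule sum_int_interval_eq[where a=0 and b=D]) (use assms False in \<open>auto simp: cf_def split: if_splits\<close>)
  also have "\<dots> = (\<Sum>i\<in>{0..nat D}. cf A (int i) * cf B (D - int i))"
    by (rule sum.reindex_bij_witness[of _ int nat]) (use False in auto)
  also have "\<dots> = (\<Sum>i\<in>{0..nat D}. fps_nth A i * fps_nth B (nat D - i))"
    by (rule sum.cong) (use False in \<open>auto simp: cf_def nat_diff_distrib\<close>)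
  also have "\<dots> = cf (A*B) D" using False by (simp add: cf_def fps_mult_nth)
  finally show ?thesis by simp
qed


lemma mult_div_le_int: "0 < (n::int) \<Longrightarrow> n * (e div n) \<le> e"
proof -
  assume n: "0 < n"
  have "n * (e div n) + e mod n = e" by (metis div_mult_mod_eq mult.commute)
  moreover have "0 \<le> e mod n" using n by simp
  ultimately show ?thesis by linarith
qed

lemma lt_mult_succ_div_int: "0 < (n::int) \<Longrightarrow> e < n * (e div n + 1)"
proof -
  assume n: "0 < n"
  have "n * (e div n) + e mod n = e" by (metis div_mult_mod_eq mult.commute)
  moreover have "e mod n < n" using n by simp
  ultimately have "e < n * (e div n) + n" by linarith
  then show ?thesis by (simp add: algebra_simps)
qed

lemma div_le_from_mult: "0 < (n::int) \<Longrightarrow> n * k \<le> e \<Longrightarrow> k \<le> e div n"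
proof (rule ccontr)
  assume n: "0 < n" and k: "n * k \<le> e" and "\<not> k \<le> e div n"
  then have "e div n + 1 \<le> k" by simp
  then have "n * (e div n + 1) \<le> n * k" using n by (intro mult_left_mono) auto
  with lt_mult_succ_div_int[OF n, of e] k show False by simp
qed

definition gsub :: "('a::comm_ring_1 \<Rightarrow> 'b::comm_ring_1) \<Rightarrow> int \<Rightarrow> (int \<Rightarrow> 'b fps) \<Rightarrow> 'a fls \<Rightarrow> 'b fls" where
  "gsub phi n Wf x = Abs_fls (\<lambda>e. \<Sum>k\<in>{fls_subdegree x..e div n}. phi (fls_nth x k) * cf (Wf k) (e - n*k))"

lemma gsub_nth:
  assumes n: "0 < n" and phi0: "phi 0 = 0" and L: "\<And>k. k < L \<Longrightarrow> fls_nth x k = 0" and U: "e div n \<le> U"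
  shows "fls_nth (gsub phi n Wf x) e = (\<Sum>k\<in>{L..U}. phi (fls_nth x k) * cf (Wf k) (e - n*k))"
proof -
  have "fls_nth (gsub phi n Wf x) e = (\<Sum>k\<in>{fls_subdegree x..e div n}. phi (fls_nth x k) * cf (Wf k) (e - n*k))"
    unfolding gsub_def
  proof (rule nth_Abs_fls_lower_bound[where N="n * fls_subdegree x"], intro allI impI)
    fix e' assume e': "e' < n * fls_subdegree x"
    have "e' div n < fls_subdegree x"
    proof (rule ccontr)
      assume "\<not> e' div n < fls_subdegree x"
      then have "n * fls_subdegree x \<le> n * (e' div n)" using n by (intro mult_left_mono) auto
      with mult_div_le_int[OF n, of e'] e' show False by simp
    qed
    then show "(\<Sum>k\<in>{fls_subdegree x..e' div n}. phi (fls_nth x k) * cf (Wf k) (e' - n*k)) = 0" by simp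
  qed
  also have "\<dots> = (\<Sum>k\<in>{L..U}. phi (fls_nth x k) * cf (Wf k) (e - n*k))"
  proof (rule sum_int_interval_eq[where a="max L (fls_subdegree x)" and b="e div n"])
    fix k assume nz: "phi (fls_nth x k) * cf (Wf k) (e - n * k) \<noteq> 0"
    then have xk: "fls_nth x k \<noteq> 0" using phi0 by auto
    from nz have "n * k \<le> e" by (cases "e - n*k < 0") auto
    then have "k \<le> e div n" by (rule div_le_from_mult[OF n])
    moreover have "L \<le> k" using xk L by (meson not_less)
    moreover have "fls_subdegree x \<le> k" using xk by (rule fls_subdegree_leI)
    ultimately show "max L (fls_subdegree x) \<le> k \<and> k \<le> e div n" by simp
  qed (use U in auto)
  finally show ?thesis .
qed


lemma fls_times_nth_gen:
  fixes f g :: "'b::comm_ring_1 fls"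
  assumes L1: "\<And>i. i < L1 \<Longrightarrow> fls_nth f i = 0" and L2: "\<And>i. i < L2 \<Longrightarrow> fls_nth g i = 0"
  shows "fls_nth (f * g) e = (\<Sum>i\<in>{L1..e-L2}. fls_nth f i * fls_nth g (e - i))"
proof -
  have "fls_nth (f * g) e = (\<Sum>i\<in>{fls_subdegree f..e - fls_subdegree g}. fls_nth f i * fls_nth g (e - i))"
    by (rule fls_times_nth(2))
  also have "\<dots> = (\<Sum>i\<in>{L1..e-L2}. fls_nth f i * fls_nth g (e - i))"
  proof (rule sum_int_interval_eq[where a="max L1 (fls_subdegree f)" and b="min (e - L2) (e - fls_subdegree g)"])
    fix k assume nz: "fls_nth f k * fls_nth g (e - k) \<noteq> 0"
    then have f: "fls_nth f k \<noteq> 0" and g: "fls_nth g (e - k) \<noteq> 0" by auto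
    have "L1 \<le> k" using f L1 by (meson not_less)
    moreover have "fls_subdegree f \<le> k" using f by (rule fls_subdegree_leI)
    moreover have "L2 \<le> e - k" using g L2 by (meson not_less)
    moreover have "fls_subdegree g \<le> e - k" using g by (rule fls_subdegree_leI)
    ultimately show "max L1 (fls_subdegree f) \<le> k \<and> k \<le> min (e - L2) (e - fls_subdegree g)" by simp
  qed auto
  finally show ?thesis .
qed

locale gsub_hom =
  fixes phi :: "'a::comm_ring_1 \<Rightarrow> 'b::comm_ring_1" and n :: int and Wf :: "int \<Rightarrow> 'b fps"
  assumes phi: "comm_ring_hom phi" and n: "0 < n"
    and Wf_add: "\<And>a b. Wf (a + b) = Wf a * Wf b" and Wf_0: "Wf 0 = 1"
begin

interpretation P: comm_ring_hom phi by (rule phi)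

lemma gnth: assumes "\<And>k. k < L \<Longrightarrow> fls_nth x k = 0" "e div n \<le> U" shows
   "fls_nth (gsub phi n Wf x) e = (\<Sum>k\<in>{L..U}. phi (fls_nth x k) * cf (Wf k) (e - n*k))"
  using gsub_nth[where phi=phi and n=n and Wf=Wf and L=L and x=x and e=e and U=U] n assms by simp

lemma nth_below: assumes "\<And>k. k < L \<Longrightarrow> fls_nth x k = 0" "e < n * L"
  shows "fls_nth (gsub phi n Wf x) e = 0"
proof -
  have "e div n < L"
  proof (rule ccontr)
    assume "\<not> e div n < L"
    then have "n * L \<le> n * (e div n)" using n by (intro mult_left_mono) auto
    with mult_div_le_int[OF n, of e] assms(2) show False by simp
  qed
  then show ?thesis using gnth[OF assms(1), where e=e and U="e div n"] by simp
qed

lemma gsub_one: "gsub phi n Wf 1 = 1"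
proof (rule fls_eqI)
  fix e
  have "fls_nth (gsub phi n Wf 1) e = (\<Sum>k\<in>{0..max 0 (e div n)}. phi (fls_nth 1 k) * cf (Wf k) (e - n*k))"
    by (rule gnth) auto
  also have "\<dots> = (\<Sum>k\<in>{0..max 0 (e div n)}. if k = 0 then cf 1 e else 0)"
    by (rule sum.cong) (auto simp: Wf_0)
  also have "\<dots> = cf 1 e" by simp
  also have "\<dots> = fls_nth 1 e" by (auto simp: cf_def)
  finally show "fls_nth (gsub phi n Wf 1) e = fls_nth 1 e" .
qed

lemma gsub_add: "gsub phi n Wf (x + y) = gsub phi n Wf x + gsub phi n Wf y"
proof (rule fls_eqI)
  fix e
  define Lm where "Lm = min (fls_subdegree x) (fls_subdegree y)"
  have zx: "\<And>k. k < Lm \<Longrightarrow> fls_nth x k = 0" and zy: "\<And>k. k < Lm \<Longrightarrow> fls_nth y k = 0" by (auto simp: Lm_def)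
  have zxy: "\<And>k. k < Lm \<Longrightarrow> fls_nth (x + y) k = 0" using zx zy by simp
  show "fls_nth (gsub phi n Wf (x + y)) e = fls_nth (gsub phi n Wf x + gsub phi n Wf y) e"
    using gnth[where L=Lm, OF zxy, where e=e and U="e div n"] gnth[where L=Lm, OF zx, where e=e and U="e div n"]
      gnth[where L=Lm, OF zy, where e=e and U="e div n"]
    by (simp add: P.hom_add distrib_right sum.distrib)
qed

lemma div_shift: "(e - n * c) div n = e div n - c"
proof -
  have "(e + (- c) * n) div n = e div n + (- c)" using n by (subst div_mult_self1) auto
  then show ?thesis by (simp add: algebra_simps)
qed

lemma inner:
  assumes i: "Lx \<le> i" and j: "Ly \<le> j"
  shows "(\<Sum>e1\<in>{n*Lx..e-n*Ly}. cf (Wf i) (e1 - n*i) * cf (Wf j) (e - e1 - n*j))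
       = cf (Wf (i + j)) (e - n*(i+j))"
proof -
  have "(\<Sum>e1\<in>{n*Lx..e-n*Ly}. cf (Wf i) (e1 - n*i) * cf (Wf j) (e - e1 - n*j))
      = (\<Sum>d\<in>{n*Lx - n*i..e-n*Ly - n*i}. cf (Wf i) (d + n*i - n*i) * cf (Wf j) (e - (d + n*i) - n*j))"
    using sum_int_shift[of "\<lambda>e1. cf (Wf i) (e1 - n*i) * cf (Wf j) (e - e1 - n*j)" "n*Lx" "e-n*Ly" "- n*i"]
    by simp
  also have "\<dots> = (\<Sum>d\<in>{n*Lx - n*i..e-n*Ly - n*i}. cf (Wf i) d * cf (Wf j) ((e - n*(i+j)) - d))"
    by (rule sum.cong) (auto simp: algebra_simps)
  also have "\<dots> = cf (Wf i * Wf j) (e - n*(i+j))"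
  proof (rule cf_mult[symmetric])
    have "n * Lx \<le> n * i" using i n by (intro mult_left_mono) auto
    then show "n * Lx - n * i \<le> 0" by simp
    have "n * Ly \<le> n * j" using j n by (intro mult_left_mono) auto
    then show "e - n * (i + j) \<le> e - n * Ly - n * i" by (simp add: algebra_simps)
  qed
  finally show ?thesis by (simp add: Wf_add)
qed

end


context gsub_hom begin

interpretation P: comm_ring_hom phi by (rule phi)

lemma div_mono_n: "a \<le> b \<Longrightarrow> a div n \<le> b div n"
  using n by (simp add: zdiv_mono1)

lemma gsub_mult: "gsub phi n Wf (x * y) = gsub phi n Wf x * gsub phi n Wf y"
proof (rule fls_eqI)
  fix e
  define Lx where "Lx = fls_subdegree x"
  define Ly where "Ly = fls_subdegree y"
  define a where "a i = phi (fls_nth x i)" for i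
  define b where "b j = phi (fls_nth y j)" for j
  define U where "U = max ((e - n*Ly) div n) ((e - n*Lx) div n)"
  have zx: "\<And>k. k < Lx \<Longrightarrow> fls_nth x k = 0" and zy: "\<And>k. k < Ly \<Longrightarrow> fls_nth y k = 0"
    by (auto simp: Lx_def Ly_def)
  have zxy: "\<And>k. k < Lx + Ly \<Longrightarrow> fls_nth (x * y) k = 0"
    by (simp add: Lx_def Ly_def fls_times_nth_eq0)
  have gx0: "\<And>k. k < n*Lx \<Longrightarrow> fls_nth (gsub phi n Wf x) k = 0" by (rule nth_below[OF zx])
  have gy0: "\<And>k. k < n*Ly \<Longrightarrow> fls_nth (gsub phi n Wf y) k = 0" by (rule nth_below[OF zy])
  let ?E = "{n*Lx..e-n*Ly}"
  have "fls_nth (gsub phi n Wf x * gsub phi n Wf y) e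
     = (\<Sum>e1\<in>?E. fls_nth (gsub phi n Wf x) e1 * fls_nth (gsub phi n Wf y) (e - e1))"
    by (rule fls_times_nth_gen[OF gx0 gy0])
  also have "\<dots> = (\<Sum>e1\<in>?E. (\<Sum>i\<in>{Lx..U}. a i * cf (Wf i) (e1 - n*i)) * (\<Sum>j\<in>{Ly..U}. b j * cf (Wf j) (e - e1 - n*j)))"
  proof (rule sum.cong[OF refl])
    fix e1 assume e1: "e1 \<in> ?E"
    have "e1 div n \<le> (e - n*Ly) div n" using e1 by (intro div_mono_n) auto
    then have u1: "e1 div n \<le> U" by (simp add: U_def)
    have "(e - e1) div n \<le> (e - n*Lx) div n" using e1 by (intro div_mono_n) auto
    then have u2: "(e - e1) div n \<le> U" by (simp add: U_def)
    show "fls_nth (gsub phi n Wf x) e1 * fls_nth (gsub phi n Wf y) (e - e1) =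
      (\<Sum>i\<in>{Lx..U}. a i * cf (Wf i) (e1 - n*i)) * (\<Sum>j\<in>{Ly..U}. b j * cf (Wf j) (e - e1 - n*j))"
      using gnth[where L=Lx, OF zx u1] gnth[where L=Ly, OF zy u2] by (simp add: a_def b_def)
  qed
  also have "\<dots> = (\<Sum>e1\<in>?E. \<Sum>i\<in>{Lx..U}. \<Sum>j\<in>{Ly..U}. (a i * b j) * (cf (Wf i) (e1 - n*i) * cf (Wf j) (e - e1 - n*j)))"
    by (simp add: sum_product mult_ac)
  also have "\<dots> = (\<Sum>i\<in>{Lx..U}. \<Sum>e1\<in>?E. \<Sum>j\<in>{Ly..U}. (a i * b j) * (cf (Wf i) (e1 - n*i) * cf (Wf j) (e - e1 - n*j)))"
    by (rule sum.swap)
  also have "\<dots> = (\<Sum>i\<in>{Lx..U}. \<Sum>j\<in>{Ly..U}. \<Sum>e1\<in>?E. (a i * b j) * (cf (Wf i) (e1 - n*i) * cf (Wf j) (e - e1 - n*j)))"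
    by (rule sum.cong[OF refl], rule sum.swap)
  also have "\<dots> = (\<Sum>i\<in>{Lx..U}. \<Sum>j\<in>{Ly..U}. (a i * b j) * cf (Wf (i + j)) (e - n*(i+j)))"
    by (intro sum.cong refl) (simp add: sum_distrib_left[symmetric] inner)
  finally have LHS: "fls_nth (gsub phi n Wf x * gsub phi n Wf y) e
     = (\<Sum>i\<in>{Lx..U}. \<Sum>j\<in>{Ly..U}. (a i * b j) * cf (Wf (i + j)) (e - n*(i+j)))" .

  have "fls_nth (gsub phi n Wf (x * y)) e = (\<Sum>k\<in>{Lx+Ly..e div n}. phi (fls_nth (x*y) k) * cf (Wf k) (e - n*k))"
    by (rule gnth[OF zxy order.refl])
  also have "\<dots> = (\<Sum>k\<in>{Lx+Ly..e div n}. \<Sum>i\<in>{Lx..k-Ly}. a i * b (k - i) * cf (Wf k) (e - n*k))"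
    by (simp add: fls_times_nth_gen[OF zx zy] P.hom_sum P.hom_mult a_def b_def sum_distrib_right)
  also have "\<dots> = (\<Sum>k\<in>{Lx+Ly..e div n}. \<Sum>i\<in>{Lx..U}. a i * b (k - i) * cf (Wf k) (e - n*k))"
  proof (rule sum.cong[OF refl])
    fix k assume k: "k \<in> {Lx+Ly..e div n}"
    have "k - Ly \<le> e div n - Ly" using k by simp
    also have "\<dots> = (e - n*Ly) div n" by (simp add: div_shift)
    also have "\<dots> \<le> U" by (simp add: U_def)
    finally have kU: "k - Ly \<le> U" .
    show "(\<Sum>i\<in>{Lx..k-Ly}. a i * b (k - i) * cf (Wf k) (e - n*k)) = (\<Sum>i\<in>{Lx..U}. a i * b (k - i) * cf (Wf k) (e - n*k))"
    proof (rule sum_int_interval_eq[where a=Lx and b="k-Ly"])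
      fix i assume "a i * b (k - i) * cf (Wf k) (e - n * k) \<noteq> 0"
      then have "fls_nth x i \<noteq> 0" "fls_nth y (k - i) \<noteq> 0" by (auto simp: a_def b_def)
      then have "\<not> i < Lx" "\<not> k - i < Ly" using zx zy by blast+
      then show "Lx \<le> i \<and> i \<le> k - Ly" by linarith
    qed (use kU in auto)
  qed
  also have "\<dots> = (\<Sum>i\<in>{Lx..U}. \<Sum>k\<in>{Lx+Ly..e div n}. a i * b (k - i) * cf (Wf k) (e - n*k))"
    by (rule sum.swap)
  also have "\<dots> = (\<Sum>i\<in>{Lx..U}. \<Sum>j\<in>{Lx+Ly-i..e div n - i}. a i * b j * cf (Wf (i + j)) (e - n*(i+j)))"
  proof (rule sum.cong[OF refl])
    fix i
    show "(\<Sum>k\<in>{Lx+Ly..e div n}. a i * b (k - i) * cf (Wf k) (e - n*k)) =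
          (\<Sum>j\<in>{Lx+Ly-i..e div n - i}. a i * b j * cf (Wf (i + j)) (e - n*(i+j)))"
      using sum_int_shift[of "\<lambda>k. a i * b (k - i) * cf (Wf k) (e - n*k)" "Lx+Ly" "e div n" "-i"]
      by (simp add: algebra_simps)
  qed
  also have "\<dots> = (\<Sum>i\<in>{Lx..U}. \<Sum>j\<in>{Ly..U}. a i * b j * cf (Wf (i + j)) (e - n*(i+j)))"
  proof (rule sum.cong[OF refl])
    fix i assume i: "i \<in> {Lx..U}"
    have "e div n - i \<le> e div n - Lx" using i by simp
    also have "\<dots> = (e - n*Lx) div n" by (simp add: div_shift)
    also have "\<dots> \<le> U" by (simp add: U_def)
    finally have iU: "e div n - i \<le> U" .
    show "(\<Sum>j\<in>{Lx+Ly-i..e div n - i}. a i * b j * cf (Wf (i + j)) (e - n*(i+j))) =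
          (\<Sum>j\<in>{Ly..U}. a i * b j * cf (Wf (i + j)) (e - n*(i+j)))"
    proof (rule sum_int_interval_eq[where a=Ly and b="e div n - i"])
      fix j assume nz: "a i * b j * cf (Wf (i + j)) (e - n * (i + j)) \<noteq> 0"
      then have "fls_nth y j \<noteq> 0" by (auto simp: b_def)
      then have "Ly \<le> j" using zy by (meson not_less)
      moreover from nz have "n * (i+j) \<le> e" by (cases "e - n*(i+j) < 0") auto
      then have "i + j \<le> e div n" by (rule div_le_from_mult[OF n])
      ultimately show "Ly \<le> j \<and> j \<le> e div n - i" by simp
    qed (use i iU in auto)
  qed
  finally show "fls_nth (gsub phi n Wf (x * y)) e = fls_nth (gsub phi n Wf x * gsub phi n Wf y) e"
    using LHS by simp
qed

lemma gsub_zero: "gsub phi n Wf 0 = 0"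
  using gsub_add[of 0 0] by simp

lemma gsub_comm_ring_hom: "comm_ring_hom (gsub phi n Wf)"
  by unfold_locales (auto simp: gsub_one gsub_add gsub_mult gsub_zero)

end


definition ipow :: "'b::comm_ring_1 \<Rightarrow> 'b \<Rightarrow> int \<Rightarrow> 'b" where
  "ipow W V k = (if 0 \<le> k then W ^ nat k else V ^ nat (- k))"

lemma ipow_add:
  assumes WV: "W * V = 1"
  shows "ipow W V (a + b) = ipow W V a * ipow W V b"
proof -
  have c1: "W ^ p * V ^ q = (if q \<le> p then W ^ (p - q) else V ^ (q - p))" for p q :: nat
  proof (cases "q \<le> p")
    case True
    then have "W ^ p * V ^ q = W ^ (p - q) * (W * V) ^ q"
      by (simp add: power_mult_distrib mult_ac flip: power_add)
    then show ?thesis using True WV by simp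
  next
    case False
    then have "V ^ q = V ^ p * V ^ (q - p)" by (simp flip: power_add)
    then have "W ^ p * V ^ q = V ^ (q - p) * (W * V) ^ p"
      by (simp add: power_mult_distrib mult_ac)
    then show ?thesis using False WV by simp
  qed
  show ?thesis
  proof (cases "0 \<le> a"; cases "0 \<le> b")
    assume "0 \<le> a" "0 \<le> b" then show ?thesis
      by (simp add: ipow_def nat_add_distrib power_add)
  next
    assume a: "0 \<le> a" and b: "\<not> 0 \<le> b"
    then show ?thesis using c1[of "nat a" "nat (-b)"]
      by (auto simp: ipow_def nat_diff_distrib' intro!: arg_cong2[where f="(^)"])
  next
    assume a: "\<not> 0 \<le> a" and b: "0 \<le> b"
    then show ?thesis using c1[of "nat b" "nat (-a)"]
      by (auto simp: ipow_def nat_diff_distrib' mult.commute intro!: arg_cong2[where f="(^)"])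
  next
    assume a: "\<not> 0 \<le> a" and b: "\<not> 0 \<le> b"
    then have "nat (- a - b) = nat (-a) + nat (-b)" by simp
    then show ?thesis using a b by (simp add: ipow_def power_add)
  qed
qed

definition geomV :: "nat \<Rightarrow> 'a::comm_ring_1 poly fps" where
  "geomV m = Abs_fps (\<lambda>j. if m dvd j then (- [:0, 1:]) ^ (j div m) else 0)"

lemma geomV_inv:
  assumes m: "0 < m"
  shows "(1 + fps_const [:0, 1:] * fps_X ^ m) * geomV m = (1 :: 'a::comm_ring_1 poly fps)"
proof (rule fps_ext)
  fix j
  let ?c = "[:0, 1:] :: 'a poly"
  have "fps_nth ((1 + fps_const ?c * fps_X ^ m) * geomV m) j
      = fps_nth (geomV m) j + ?c * fps_nth (fps_X ^ m * geomV m) j"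
    by (simp add: distrib_right mult.assoc)
  also have "\<dots> = fps_nth (1 :: 'a poly fps) j"
  proof (cases "j < m")
    case True
    then show ?thesis using m by (auto simp: geomV_def fps_X_power_mult_nth dest: dvd_imp_le)
  next
    case False
    then have j: "j = (j - m) + m" by simp
    have dv: "m dvd j \<longleftrightarrow> m dvd (j - m)" using False by (metis dvd_add_left_iff dvd_refl j)
    show ?thesis
    proof (cases "m dvd j")
      case True
      then have "m dvd (j - m)" using dv by simp
      then obtain q where q: "j - m = m * q" by (auto elim!: dvdE)
      then have jq: "j = m * (Suc q)" using j by simp
      have "(j - m) div m = q" using q m by simp
      moreover have "j div m = Suc q" using jq m by simp
      ultimately show ?thesis using False True dv m
        by (simp add: geomV_def fps_X_power_mult_nth)
    next
      case nd: False
      then show ?thesis using False dv m by (simp add: geomV_def fps_X_power_mult_nth)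
    qed
  qed
  finally show "fps_nth ((1 + fps_const ?c * fps_X ^ m) * geomV m) j = fps_nth 1 j" .
qed

lemma sigma_w_ipow: "sigma_w m k = ipow (1 + fps_const [:0, 1:] * fps_X ^ m) (geomV m) k"
  by (simp add: sigma_w_def ipow_def geomV_def)

lemma sigma_w_add:
  assumes "0 < m"
  shows "sigma_w m (a + b) = (sigma_w m a * sigma_w m b :: 'a::comm_ring_1 poly fps)"
  unfolding sigma_w_ipow by (rule ipow_add[OF geomV_inv[OF assms]])

lemma sigma_w_0: "sigma_w m 0 = 1"
  by (simp add: sigma_w_def)

lemma comm_ring_hom_pCons: "comm_ring_hom (\<lambda>a::'a::comm_ring_1. [:a:])"
  by unfold_locales (auto simp: one_pCons)

lemma comm_ring_hom_fls_const: "comm_ring_hom (fls_const :: 'a::comm_ring_1 \<Rightarrow> 'a fls)"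
  by unfold_locales (auto simp: fls_plus_const fls_const_mult_const)


context gsub_hom begin
interpretation P: comm_ring_hom phi by (rule phi)

lemma gsub_const: "gsub phi n Wf (fls_const a) = fls_const (phi a)"
proof (rule fls_eqI)
  fix e
  have "fls_nth (gsub phi n Wf (fls_const a)) e = (\<Sum>k\<in>{0..max 0 (e div n)}. phi (fls_nth (fls_const a) k) * cf (Wf k) (e - n*k))"
    by (rule gnth) auto
  also have "\<dots> = (\<Sum>k\<in>{0..max 0 (e div n)}. if k = 0 then phi a * cf 1 e else 0)"
    by (rule sum.cong) (auto simp: Wf_0)
  also have "\<dots> = fls_nth (fls_const (phi a)) e" by (simp add: cf_def)
  finally show "fls_nth (gsub phi n Wf (fls_const a)) e = fls_nth (fls_const (phi a)) e" .
qed
end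

lemma gsub_hom_one: "0 < n \<Longrightarrow> comm_ring_hom phi \<Longrightarrow> gsub_hom phi n (\<lambda>_. 1)"
  by (simp add: gsub_hom_def)

lemma gsub_trivial_nth:
  assumes n: "0 < n" and phi: "comm_ring_hom phi"
  shows "fls_nth (gsub phi n (\<lambda>_. 1) x) e = (if n dvd e then phi (fls_nth x (e div n)) else 0)"
proof -
  interpret G: gsub_hom phi n "\<lambda>_. 1" by (rule gsub_hom_one[OF n phi])
  interpret P: comm_ring_hom phi by (rule phi)
  have "fls_nth (gsub phi n (\<lambda>_. 1) x) e = (\<Sum>k\<in>{fls_subdegree x..e div n}. phi (fls_nth x k) * cf 1 (e - n*k))"
    by (rule G.gnth) auto
  also have "\<dots> = (\<Sum>k\<in>{fls_subdegree x..e div n}. if k = e div n then (if n dvd e then phi (fls_nth x k) else 0) else 0)"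
  proof (rule sum.cong[OF refl])
    fix k
    have "e - n * k = 0 \<longleftrightarrow> (n dvd e \<and> k = e div n)" using n by auto
    then show "phi (fls_nth x k) * cf 1 (e - n * k) = (if k = e div n then (if n dvd e then phi (fls_nth x k) else 0) else 0)"
      by (auto simp: cf_def)
  qed
  also have "\<dots> = (if n dvd e then phi (fls_nth x (e div n)) else 0)"
    by (auto simp: not_le)
  finally show ?thesis .
qed

lemma incl_lambda_gsub: "incl_lambda = gsub fls_const 1 (\<lambda>_. 1)"
proof (rule ext, rule fls_eqI)
  fix x :: "'a::comm_ring_1 fls" and e
  have "fls_nth (incl_lambda x) e = fls_const (fls_nth x e)"
    unfolding incl_lambda_def
    by (rule nth_Abs_fls_lower_bound[where N="fls_subdegree x"]) auto
  then show "fls_nth (incl_lambda x) e = fls_nth (gsub fls_const 1 (\<lambda>_. 1) x) e"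
    by (simp add: gsub_trivial_nth[OF _ comm_ring_hom_fls_const])
qed

lemma incl_r_gsub:
  assumes q: "quotient_of r = (m, n)"
  shows "incl_r r = gsub (\<lambda>a. [:a:]) n (\<lambda>_. 1)"
proof (rule ext, rule fls_eqI)
  fix x :: "'a::comm_ring_1 fls" and e
  have n: "0 < n" using quotient_of_denom_pos[OF q] .
  have "fls_nth (incl_r r x) e = (if n dvd e then [:fls_nth x (e div n):] else 0)"
    unfolding incl_r_def q prod.case
  proof (rule nth_Abs_fls_lower_bound[where N="n * fls_subdegree x"], intro allI impI)
    fix e' assume e': "e' < n * fls_subdegree x"
    have "e' div n < fls_subdegree x"
    proof (rule ccontr)
      assume "\<not> e' div n < fls_subdegree x"
      then have "n * fls_subdegree x \<le> n * (e' div n)" using n by (intro mult_left_mono) auto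
      with mult_div_le_int[OF n, of e'] e' show False by simp
    qed
    then show "(if n dvd e' then [:fls_nth x (e' div n):] else 0) = 0" by simp
  qed
  then show "fls_nth (incl_r r x) e = fls_nth (gsub (\<lambda>a. [:a:]) n (\<lambda>_. 1) x) e"
    by (simp add: gsub_trivial_nth[OF n comm_ring_hom_pCons])
qed

lemma sigma_r_gsub:
  assumes q: "quotient_of r = (m, n)"
  shows "sigma_r r = gsub (\<lambda>a. [:a:]) n (sigma_w (nat m))"
proof (rule ext)
  fix x :: "'a::comm_ring_1 fls"
  have n: "0 < n" using quotient_of_denom_pos[OF q] .
  show "sigma_r r x = gsub (\<lambda>a. [:a:]) n (sigma_w (nat m)) x"
    unfolding sigma_r_def gsub_def q prod.case
  proof (intro arg_cong[where f=Abs_fls] ext sum.cong refl)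
    fix e k assume k: "k \<in> {fls_subdegree x..e div n}"
    then have "n * k \<le> n * (e div n)" using n by (intro mult_left_mono) auto
    with mult_div_le_int[OF n, of e] have "0 \<le> e - n * k" by simp
    then show "[:fls_nth x k:] * fps_nth (sigma_w (nat m) k) (nat (e - n * k)) =
               [:fls_nth x k:] * cf (sigma_w (nat m) k) (e - n * k)" by (simp add: cf_def)
  qed
qed

definition lam :: "int \<Rightarrow> 'a::comm_ring_1 fls" where "lam k = fls_shift (- k) 1"

lemma lam_add: "lam (a + b) = lam a * lam b"
  by (simp add: lam_def fls_times_both_shifted_simp)

lemma lam_0: "lam 0 = 1" by (simp add: lam_def)

lemma gsub_hom_lam: "gsub_hom fls_const 1 (\<lambda>k. fps_const (lam k :: 'a::comm_ring_1 fls))"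
  by (simp add: gsub_hom_def comm_ring_hom_fls_const lam_add lam_0)

lemma lambda_subst_gsub: "lambda_subst = gsub fls_const 1 (\<lambda>k. fps_const (lam k))"
proof (rule ext, rule fls_eqI)
  fix x :: "'a::comm_ring_1 fls" and e
  interpret G: gsub_hom fls_const 1 "\<lambda>k. fps_const (lam k :: 'a fls)" by (rule gsub_hom_lam)
  have l: "fls_nth (lambda_subst x) e = fls_shift (- e) (fls_const (fls_nth x e))"
    unfolding lambda_subst_def
    by (rule nth_Abs_fls_lower_bound[where N="fls_subdegree x"]) auto
  have "fls_nth (gsub fls_const 1 (\<lambda>k. fps_const (lam k)) x) e
      = (\<Sum>k\<in>{fls_subdegree x..e}. fls_const (fls_nth x k) * cf (fps_const (lam k)) (e - k))"
    using G.gnth[where L="fls_subdegree x" and x=x and e=e and U=e] by simp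
  also have "\<dots> = (\<Sum>k\<in>{fls_subdegree x..e}. if k = e then fls_const (fls_nth x e) * lam e else 0)"
    by (rule sum.cong) (auto simp: cf_def)
  also have "\<dots> = fls_const (fls_nth x e) * lam e" by (auto simp: not_le)
  also have "\<dots> = fls_shift (- e) (fls_const (fls_nth x e))"
    by (rule fls_eqI) (simp add: lam_def)
  finally show "fls_nth (lambda_subst x) e = fls_nth (gsub fls_const 1 (\<lambda>k. fps_const (lam k)) x) e"
    using l by simp
qed


lemma inner_gen:
  assumes n: "0 < (n::int)" and i: "Lx \<le> i" and j: "Ly \<le> j"
  shows "(\<Sum>e1\<in>{n*Lx..e-n*Ly}. cf A (e1 - n*i) * cf B (e - e1 - n*j))
       = cf (A * B) (e - n*(i+j))"
proof -
  have "(\<Sum>e1\<in>{n*Lx..e-n*Ly}. cf A (e1 - n*i) * cf B (e - e1 - n*j))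
      = (\<Sum>d\<in>{n*Lx - n*i..e-n*Ly - n*i}. cf A (d + n*i - n*i) * cf B (e - (d + n*i) - n*j))"
    using sum_int_shift[of "\<lambda>e1. cf A (e1 - n*i) * cf B (e - e1 - n*j)" "n*Lx" "e-n*Ly" "- n*i"]
    by simp
  also have "\<dots> = (\<Sum>d\<in>{n*Lx - n*i..e-n*Ly - n*i}. cf A d * cf B ((e - n*(i+j)) - d))"
    by (rule sum.cong) (auto simp: algebra_simps)
  also have "\<dots> = cf (A * B) (e - n*(i+j))"
  proof (rule cf_mult[symmetric])
    have "n * Lx \<le> n * i" using i n by (intro mult_left_mono) auto
    then show "n * Lx - n * i \<le> 0" by simp
    have "n * Ly \<le> n * j" using j n by (intro mult_left_mono) auto
    then show "e - n * (i + j) \<le> e - n * Ly - n * i" by (simp add: algebra_simps)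
  qed
  finally show ?thesis .
qed

lemma gsub_prod2:
  assumes G1: "gsub_hom phi n W1" and G2: "gsub_hom phi n W2"
    and La: "\<And>k. k < La \<Longrightarrow> fls_nth x k = 0" and Lb: "\<And>k. k < Lb \<Longrightarrow> fls_nth y k = 0"
    and U1: "(e - n*Lb) div n \<le> U" and U2: "(e - n*La) div n \<le> U"
  shows "fls_nth (gsub phi n W1 x * gsub phi n W2 y) e
     = (\<Sum>i\<in>{La..U}. \<Sum>j\<in>{Lb..U}. (phi (fls_nth x i) * phi (fls_nth y j)) * cf (W1 i * W2 j) (e - n*(i+j)))"
proof -
  interpret A: gsub_hom phi n W1 by fact
  interpret B: gsub_hom phi n W2 by fact
  have n: "0 < n" by (rule A.n)
  define a where "a i = phi (fls_nth x i)" for i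
  define b where "b j = phi (fls_nth y j)" for j
  have gx0: "\<And>k. k < n*La \<Longrightarrow> fls_nth (gsub phi n W1 x) k = 0" by (rule A.nth_below[OF La])
  have gy0: "\<And>k. k < n*Lb \<Longrightarrow> fls_nth (gsub phi n W2 y) k = 0" by (rule B.nth_below[OF Lb])
  let ?E = "{n*La..e-n*Lb}"
  have "fls_nth (gsub phi n W1 x * gsub phi n W2 y) e
     = (\<Sum>e1\<in>?E. fls_nth (gsub phi n W1 x) e1 * fls_nth (gsub phi n W2 y) (e - e1))"
    by (rule fls_times_nth_gen[OF gx0 gy0])
  also have "\<dots> = (\<Sum>e1\<in>?E. (\<Sum>i\<in>{La..U}. a i * cf (W1 i) (e1 - n*i)) * (\<Sum>j\<in>{Lb..U}. b j * cf (W2 j) (e - e1 - n*j)))"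
  proof (rule sum.cong[OF refl])
    fix e1 assume e1: "e1 \<in> ?E"
    have "e1 div n \<le> (e - n*Lb) div n" using e1 n by (intro zdiv_mono1) auto
    then have u1: "e1 div n \<le> U" using U1 by simp
    have "(e - e1) div n \<le> (e - n*La) div n" using e1 n by (intro zdiv_mono1) auto
    then have u2: "(e - e1) div n \<le> U" using U2 by simp
    show "fls_nth (gsub phi n W1 x) e1 * fls_nth (gsub phi n W2 y) (e - e1) =
      (\<Sum>i\<in>{La..U}. a i * cf (W1 i) (e1 - n*i)) * (\<Sum>j\<in>{Lb..U}. b j * cf (W2 j) (e - e1 - n*j))"
      using A.gnth[where L=La, OF La u1] B.gnth[where L=Lb, OF Lb u2] by (simp add: a_def b_def)
  qed
  also have "\<dots> = (\<Sum>e1\<in>?E. \<Sum>i\<in>{La..U}. \<Sum>j\<in>{Lb..U}. (a i * b j) * (cf (W1 i) (e1 - n*i) * cf (W2 j) (e - e1 - n*j)))"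
    by (simp add: sum_product mult_ac)
  also have "\<dots> = (\<Sum>i\<in>{La..U}. \<Sum>e1\<in>?E. \<Sum>j\<in>{Lb..U}. (a i * b j) * (cf (W1 i) (e1 - n*i) * cf (W2 j) (e - e1 - n*j)))"
    by (rule sum.swap)
  also have "\<dots> = (\<Sum>i\<in>{La..U}. \<Sum>j\<in>{Lb..U}. \<Sum>e1\<in>?E. (a i * b j) * (cf (W1 i) (e1 - n*i) * cf (W2 j) (e - e1 - n*j)))"
    by (rule sum.cong[OF refl], rule sum.swap)
  also have "\<dots> = (\<Sum>i\<in>{La..U}. \<Sum>j\<in>{Lb..U}. (a i * b j) * cf (W1 i * W2 j) (e - n*(i+j)))"
    by (intro sum.cong refl) (simp add: sum_distrib_left[symmetric] inner_gen[OF n])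
  finally show ?thesis by (simp add: a_def b_def)
qed


definition homog :: "nat \<Rightarrow> 'a::comm_ring_1 poly fps \<Rightarrow> bool" where
  "homog m f \<longleftrightarrow> (\<forall>d p. coeff (fps_nth f d) p \<noteq> 0 \<longrightarrow> d = m * p)"

definition diag :: "nat \<Rightarrow> 'a::comm_ring_1 poly fps \<Rightarrow> nat \<Rightarrow> 'a" where
  "diag m f p = coeff (fps_nth f (m * p)) p"

lemma homogD: "homog m f \<Longrightarrow> coeff (fps_nth f d) p \<noteq> 0 \<Longrightarrow> d = m * p"
  by (auto simp: homog_def)

lemma coeff_fps_mult:
  "coeff (fps_nth (f * g) d) p = (\<Sum>i=0..d. \<Sum>p1\<le>p. coeff (fps_nth f i) p1 * coeff (fps_nth g (d - i)) (p - p1))"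
  by (simp add: fps_mult_nth coeff_sum coeff_mult)

lemma homog_mult:
  assumes f: "homog m f" and g: "homog m g"
  shows "homog m (f * g)"
  unfolding homog_def
proof (intro allI impI)
  fix d p assume "coeff (fps_nth (f * g) d) p \<noteq> 0"
  then obtain i where i: "i \<in> {0..d}" and
      nz0: "(\<Sum>p1\<le>p. coeff (fps_nth f i) p1 * coeff (fps_nth g (d - i)) (p - p1)) \<noteq> 0"
    unfolding coeff_fps_mult by (rule sum.not_neutral_contains_not_neutral)
  then obtain p1 where p1: "p1 \<in> {..p}"
    and nz: "coeff (fps_nth f i) p1 * coeff (fps_nth g (d - i)) (p - p1) \<noteq> 0"
    using sum.not_neutral_contains_not_neutral[OF nz0] by blast
  from nz have "i = m * p1" using homogD[OF f] by (metis mult_zero_left)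
  moreover from nz have "d - i = m * (p - p1)" using homogD[OF g] by (metis mult_zero_right)
  ultimately have "d = m * p1 + m * (p - p1)" using i by simp
  also have "\<dots> = m * p" using p1 by (simp flip: distrib_left)
  finally show "d = m * p" .
qed

lemma homog_one: "homog m 1"
  by (auto simp: homog_def)

lemma homog_add: "homog m f \<Longrightarrow> homog m g \<Longrightarrow> homog m (f + g)"
  unfolding homog_def
proof (intro allI impI)
  fix d p assume f: "\<forall>d p. coeff (fps_nth f d) p \<noteq> 0 \<longrightarrow> d = m * p" and g: "\<forall>d p. coeff (fps_nth g d) p \<noteq> 0 \<longrightarrow> d = m * p"
    and "coeff (fps_nth (f + g) d) p \<noteq> 0"
  then have "coeff (fps_nth f d) p \<noteq> 0 \<or> coeff (fps_nth g d) p \<noteq> 0" by auto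
  then show "d = m * p" using f g by blast
qed

lemma homog_zero: "homog m 0"
  by (auto simp: homog_def)

lemma homog_power: "homog m f \<Longrightarrow> homog m (f ^ k)"
  by (induction k) (auto simp: homog_one homog_mult)

lemma homog_sum: "(\<And>x. x \<in> S \<Longrightarrow> homog m (f x)) \<Longrightarrow> homog m (sum f S)"
  by (induction S rule: infinite_finite_induct) (auto simp: homog_zero homog_add)

lemma homog_const: "homog m (fps_const [:c:])"
  by (auto simp: homog_def coeff_pCons' split: if_splits)

lemma xpow_coeff: "coeff ([:0, 1:] ^ p :: 'a::comm_ring_1 poly) k = (if k = p then 1 else 0)"
proof (induction p arbitrary: k)
  case 0 then show ?case by (auto simp: coeff_1)
next
  case (Suc p)
  have "[:0, 1:] ^ Suc p = (pCons 0 ([:0,1:] ^ p) :: 'a poly)" by simp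
  then show ?case using Suc by (cases k) auto
qed

lemma homog_W: "homog m (1 + fps_const [:0, 1:] * fps_X ^ m)"
  by (auto simp: homog_def coeff_1 coeff_pCons' split: if_splits)

lemma coeff_const_mult: "coeff ([:c:] * q) n = c * coeff q n"
  by simp

lemma mxpow_coeff: "coeff ((- [:0, 1:]) ^ p :: 'a::comm_ring_1 poly) k = (if k = p then (-1) ^ p else 0)"
proof (induction p arbitrary: k)
  case 0 then show ?case by (auto simp: coeff_1)
next
  case (Suc p)
  have "(- [:0, 1:]) ^ Suc p = (- pCons 0 ((- [:0,1:]) ^ p) :: 'a poly)" by simp
  then show ?case using Suc by (cases k) auto
qed

lemma homog_V:
  assumes "0 < m" shows "homog m (geomV m :: 'a::comm_ring_1 poly fps)"
  unfolding homog_def geomV_def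
proof (intro allI impI)
  fix d p assume nz: "coeff (fps_nth (Abs_fps (\<lambda>j. if m dvd j then (- [:0, 1:]) ^ (j div m) else 0)) d) p \<noteq> (0::'a)"
  then have dv: "m dvd d" by (auto split: if_splits)
  with nz have "coeff ((- [:0, 1:]) ^ (d div m) :: 'a poly) p \<noteq> 0" by (simp del: minus_pCons)
  then have "p = d div m" unfolding mxpow_coeff by (auto split: if_splits)
  then show "d = m * p" using dv by simp
qed

lemma homog_sigma_w: "0 < m \<Longrightarrow> homog m (sigma_w m k :: 'a::comm_ring_1 poly fps)"
  by (simp add: sigma_w_ipow ipow_def homog_power homog_W homog_V)

lemma diag_mult_zero:
  assumes f: "homog m f" and z: "\<And>p1. p1 \<le> P \<Longrightarrow> diag m f p1 = 0"
  shows "diag m (f * g) P = 0"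
  unfolding diag_def coeff_fps_mult
proof (intro sum.neutral ballI)
  fix i p1 assume p1: "p1 \<in> {..P}"
  show "coeff (fps_nth f i) p1 * coeff (fps_nth g (m * P - i)) (P - p1) = 0"
  proof (cases "coeff (fps_nth f i) p1 = 0")
    case False
    then have "i = m * p1" by (rule homogD[OF f])
    with False z[of p1] p1 show ?thesis by (simp add: diag_def)
  qed simp
qed

lemma Wpow_nth:
  "fps_nth ((1 + fps_const [:0, 1:] * fps_X ^ m) ^ q) d
     = (\<Sum>k\<le>q. of_nat (q choose k) * (if d = m * k then [:0, 1:] ^ k else (0 :: 'a::comm_ring_1 poly)))"
proof -
  let ?B = "fps_const [:0, 1:] * fps_X ^ m :: 'a poly fps"
  have pw: "\<And>k. ?B ^ k = fps_const ([:0, 1:] ^ k) * fps_X ^ (m * k)"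
    by (simp add: power_mult_distrib power_mult)
  have "(1 + ?B) ^ q = (?B + 1) ^ q" by (simp add: add.commute)
  also have "\<dots> = (\<Sum>k\<le>q. of_nat (q choose k) * ?B ^ k * 1 ^ (q - k))" by (rule binomial_ring)
  also have "\<dots> = (\<Sum>k\<le>q. fps_const (of_nat (q choose k)) * (fps_const ([:0, 1:] ^ k) * fps_X ^ (m * k)))"
    by (simp add: pw fps_of_nat)
  finally show ?thesis
    by (simp add: fps_sum_nth del: fps_const_power) (intro sum.cong refl, auto)
qed

lemma diag_Wpow:
  assumes m: "0 < m"
  shows "diag m ((1 + fps_const [:0, 1:] * fps_X ^ m) ^ q) p = (if p \<le> q then of_nat (q choose p) else (0::'a::comm_ring_1))"
proof -
  have "diag m ((1 + fps_const [:0, 1:] * fps_X ^ m) ^ q) p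
      = coeff (\<Sum>k\<le>q. of_nat (q choose k) * (if m * p = m * k then [:0, 1:] ^ k else (0 :: 'a poly))) p"
    by (simp add: diag_def Wpow_nth)
  also have "\<dots> = coeff (\<Sum>k\<le>q. if k = p then of_nat (q choose p) * [:0, 1:] ^ p else (0 :: 'a poly)) p"
    using m by (intro arg_cong[where f="\<lambda>x. coeff x p"] sum.cong) auto
  also have "\<dots> = (if p \<le> q then of_nat (q choose p) else 0)"
    by (simp add: of_nat_poly xpow_coeff)
  finally show ?thesis .
qed


lemma incl_lambda_nth: "fls_nth (incl_lambda x) i = fls_const (fls_nth x i)"
  unfolding incl_lambda_def by (rule nth_Abs_fls_lower_bound[where N="fls_subdegree x"]) auto

lemma lambda_subst_nth: "fls_nth (lambda_subst x) i = fls_shift (- i) (fls_const (fls_nth x i))"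
  unfolding lambda_subst_def by (rule nth_Abs_fls_lower_bound[where N="fls_subdegree x"]) auto

lemma fls_nth_sum: "fls_nth (sum f S) k = (\<Sum>s\<in>S. fls_nth (f s) k)"
  by (induction S rule: infinite_finite_induct) auto

lemma h_coeff:
  "fls_nth (fls_nth (incl_lambda x * lambda_subst y) k) j = fls_nth x (k - j) * fls_nth (y :: 'a::comm_ring_1 fls) j"
proof -
  define L1 where "L1 = min (fls_subdegree x) (k - j)"
  define L2 where "L2 = min (fls_subdegree y) j"
  have z1: "\<And>i. i < L1 \<Longrightarrow> fls_nth (incl_lambda x) i = 0" by (simp add: incl_lambda_nth L1_def)
  have z2: "\<And>i. i < L2 \<Longrightarrow> fls_nth (lambda_subst y) i = 0" by (simp add: lambda_subst_nth L2_def)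
  have "fls_nth (fls_nth (incl_lambda x * lambda_subst y) k) j
     = (\<Sum>i\<in>{L1..k-L2}. fls_nth (fls_nth (incl_lambda x) i * fls_nth (lambda_subst y) (k - i)) j)"
    by (simp add: fls_times_nth_gen[OF z1 z2] fls_nth_sum)
  also have "\<dots> = (\<Sum>i\<in>{L1..k-L2}. if i = k - j then fls_nth x (k - j) * fls_nth y j else 0)"
    by (rule sum.cong) (auto simp: incl_lambda_nth lambda_subst_nth)
  also have "\<dots> = fls_nth x (k - j) * fls_nth y j"
    by (simp add: L1_def L2_def)
  finally show ?thesis .
qed

lemma div_le_abs: "0 < (n::int) \<Longrightarrow> e div n \<le> \<bar>e\<bar>"
proof (cases "0 \<le> e")
  case True
  assume n: "0 < n"
  have "e div n \<le> e div 1" using n True by (intro zdiv_mono2) auto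
  then show ?thesis using True by simp
next
  case False
  assume n: "0 < n"
  then have "e div n < 0" using False by (simp add: pos_imp_zdiv_neg_iff)
  then show ?thesis by simp
qed

lemma gsub_hom_sigma:
  assumes q: "quotient_of r = (m, n)" and r: "0 < r"
  shows "gsub_hom (\<lambda>a::'a::comm_ring_1. [:a:]) n (sigma_w (nat m))"
proof -
  have n: "0 < n" using quotient_of_denom_pos[OF q] .
  have "0 < m" using r q n by (simp add: quotient_of_div[OF q] zero_less_divide_iff)
  then show ?thesis using n
    by (simp add: gsub_hom_def comm_ring_hom_pCons sigma_w_add sigma_w_0)
qed

lemma pc_mult: "[:a:] * [:b:] = [:a * b::'a::comm_ring_1:]"
proof -
  interpret comm_ring_hom "\<lambda>a::'a. [:a:]" by (rule comm_ring_hom_pCons)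
  show ?thesis by (rule hom_mult[symmetric])
qed

lemma z_coeff:
  assumes q: "quotient_of r = (m, n)" and r: "0 < r"
    and zx: "\<And>i. i < -R \<Longrightarrow> fls_nth x i = 0" and zy: "\<And>i. i < -R \<Longrightarrow> fls_nth y i = 0"
  shows "fls_nth (incl_r r x * sigma_r r y) e
     = (\<Sum>i\<in>{-R..R+\<bar>e\<bar>}. \<Sum>j\<in>{-R..R+\<bar>e\<bar>}. [:fls_nth x i * fls_nth (y::'a::comm_ring_1 fls) j:] * cf (sigma_w (nat m) j) (e - n*(i+j)))"
proof -
  have n: "0 < n" using quotient_of_denom_pos[OF q] .
  have G1: "gsub_hom (\<lambda>a::'a. [:a:]) n (\<lambda>_. 1)" by (rule gsub_hom_one[OF n comm_ring_hom_pCons])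
  have G2: "gsub_hom (\<lambda>a::'a. [:a:]) n (sigma_w (nat m))" by (rule gsub_hom_sigma[OF q r])
  interpret G: gsub_hom "\<lambda>a::'a. [:a:]" n "sigma_w (nat m)" by (rule G2)
  have U: "(e - n * (-R)) div n \<le> R + \<bar>e\<bar>"
    using G.div_shift[of e "-R"] div_le_abs[OF n, of e] by simp
  show ?thesis
    unfolding incl_r_gsub[OF q] sigma_r_gsub[OF q]
    by (subst gsub_prod2[OF G1 G2 zx zy U U]) (simp_all add: pc_mult mult.commute)
qed


lemma pc_sum: "[:sum f S:] = (\<Sum>s\<in>S. [:f s :: 'a::comm_ring_1:])"
proof -
  interpret comm_ring_hom "\<lambda>a::'a. [:a:]" by (rule comm_ring_hom_pCons)
  show ?thesis by (rule hom_sum)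
qed

lemma diag_lin:
  "diag m (\<Sum>j\<in>S. fps_const [:c j:] * G j) p = (\<Sum>j\<in>S. c j * diag m (G j) p)"
  by (simp add: diag_def fps_sum_nth coeff_sum)

lemma diag_lin':
  "coeff (\<Sum>j\<in>S. [:c j:] * G j) p = (\<Sum>j\<in>S. c j * coeff (G j) p)"
  by (simp add: coeff_sum)

locale ent =
  fixes a b :: "nat \<Rightarrow> 'a::comm_ring_1 fls" and N :: nat and R :: int
  assumes za: "\<And>l i. l < N \<Longrightarrow> i < -R \<Longrightarrow> fls_nth (a l) i = 0"
    and zb: "\<And>l i. l < N \<Longrightarrow> i < -R \<Longrightarrow> fls_nth (b l) i = 0"
begin

definition T :: "int \<Rightarrow> int \<Rightarrow> 'a" where
  "T i j = (\<Sum>l<N. fls_nth (a l) i * fls_nth (b l) j)"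

definition zent :: "rat \<Rightarrow> 'a poly fls" where
  "zent r = (\<Sum>l<N. incl_r r (a l) * sigma_r r (b l))"

definition hent :: "'a fls fls" where
  "hent = (\<Sum>l<N. incl_lambda (a l) * lambda_subst (b l))"

lemma T_zero1: "i < -R \<Longrightarrow> T i j = 0" by (simp add: T_def za)
lemma T_zero2: "j < -R \<Longrightarrow> T i j = 0" by (simp add: T_def zb)

lemma hent_coeff: "fls_nth (fls_nth hent k) j = T (k - j) j"
  by (simp add: hent_def T_def fls_nth_sum h_coeff)

lemma zent_coeff:
  assumes q: "quotient_of r = (m, n)" and r: "0 < r"
  shows "fls_nth (zent r) e = (\<Sum>i\<in>{-R..R+\<bar>e\<bar>}. \<Sum>j\<in>{-R..R+\<bar>e\<bar>}. [:T i j:] * cf (sigma_w (nat m) j) (e - n*(i+j)))"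
proof -
  let ?B = "{-R..R+\<bar>e\<bar>}"
  have "fls_nth (zent r) e = (\<Sum>l<N. \<Sum>i\<in>?B. \<Sum>j\<in>?B. [:fls_nth (a l) i * fls_nth (b l) j:] * cf (sigma_w (nat m) j) (e - n*(i+j)))"
    unfolding zent_def fls_nth_sum
    by (intro sum.cong refl z_coeff[OF q r]) (auto simp: za zb)
  also have "\<dots> = (\<Sum>i\<in>?B. \<Sum>l<N. \<Sum>j\<in>?B. [:fls_nth (a l) i * fls_nth (b l) j:] * cf (sigma_w (nat m) j) (e - n*(i+j)))"
    by (rule sum.swap)
  also have "\<dots> = (\<Sum>i\<in>?B. \<Sum>j\<in>?B. \<Sum>l<N. [:fls_nth (a l) i * fls_nth (b l) j:] * cf (sigma_w (nat m) j) (e - n*(i+j)))"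
    by (rule sum.cong[OF refl], rule sum.swap)
  also have "\<dots> = (\<Sum>i\<in>?B. \<Sum>j\<in>?B. [:T i j:] * cf (sigma_w (nat m) j) (e - n*(i+j)))"
    by (simp add: T_def pc_sum sum_distrib_right)
  finally show ?thesis .
qed

lemma forward:
  assumes T0: "\<And>i j. i + j < 0 \<Longrightarrow> T i j = 0" and r: "0 < r" and e: "e < 0"
  shows "fls_nth (zent r) e = 0"
proof -
  obtain m n where q: "quotient_of r = (m, n)" by (cases "quotient_of r")
  have n: "0 < n" using quotient_of_denom_pos[OF q] .
  show ?thesis unfolding zent_coeff[OF q r]
  proof (intro sum.neutral ballI)
    fix i j
    show "[:T i j:] * cf (sigma_w (nat m) j) (e - n * (i + j)) = 0"
    proof (cases "i + j < 0")
      case True then show ?thesis by (simp add: T0)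
    next
      case False
      then have "0 \<le> n * (i + j)" using n by simp
      then show ?thesis using e by simp
    qed
  qed
qed

end


context ent begin

lemma backward:
  assumes k0: "k0 < 0" and nz: "T (k0 - j0) j0 \<noteq> 0"
  shows "\<exists>P::nat. \<forall>r. 0 < r \<longrightarrow> (\<forall>e<0. fls_nth (zent r) e = 0) \<longrightarrow> of_int (-k0) \<le> r * of_nat P"
proof -
  define Q where "Q j = T (k0 - j) j" for j
  have Q0: "-R \<le> j \<and> j \<le> k0 + R" if "Q j \<noteq> 0" for j
  proof -
    have "\<not> j < -R" using that T_zero2 by (auto simp: Q_def)
    moreover have "\<not> k0 - j < -R" using that T_zero1 by (auto simp: Q_def)
    ultimately show ?thesis by simp
  qed
  define S where "S = {j \<in> {-R..k0+R}. Q j \<noteq> 0}"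
  have finS: "finite S" by (rule finite_subset[of _ "{-R..k0+R}"]) (auto simp: S_def)
  have j0S: "j0 \<in> S" using nz Q0[of j0] by (simp add: S_def Q_def)
  define jt where "jt = Max S"
  have jtS: "jt \<in> S" unfolding jt_def using finS j0S by (intro Max_in) auto
  have jt_max: "j \<le> jt" if "j \<in> S" for j unfolding jt_def using finS that by simp
  have jtR: "0 \<le> jt + R" using jtS by (simp add: S_def)
  define P where "P = nat (jt + R)"
  show ?thesis
  proof (intro exI[of _ P] allI impI)
    fix r :: rat assume r: "0 < r" and integ: "\<forall>e<0. fls_nth (zent r) e = 0"
    obtain m n where q: "quotient_of r = (m, n)" by (cases "quotient_of r")
    have n: "0 < n" using quotient_of_denom_pos[OF q] .
    have rmn: "r = of_int m / of_int n" by (rule quotient_of_div[OF q])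
    have m: "0 < m" using r n by (simp add: rmn zero_less_divide_iff)
    define mm where "mm = nat m"
    have mm: "0 < mm" using m by (simp add: mm_def)
    define W where "W j = (sigma_w mm j :: 'a poly fps)" for j
    have homW: "homog mm (W j)" for j unfolding W_def by (rule homog_sigma_w[OF mm])
    define F where "F = (\<Sum>j\<in>{-R..k0+R}. fps_const [:Q j:] * W j)"
    have homF: "homog mm F" unfolding F_def
      by (intro homog_sum homog_mult homog_const homW)

    have c1: "diag mm F p = coeff (fls_nth (zent r) (n*k0 + m * int p)) p" for p
    proof -
      define e where "e = n*k0 + m * int p"
      let ?B = "{-R..R+\<bar>e\<bar>}"
      have "coeff (fls_nth (zent r) e) p
          = (\<Sum>i\<in>?B. \<Sum>j\<in>?B. T i j * coeff (cf (W j) (e - n*(i+j))) p)"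
        by (simp add: zent_coeff[OF q r] coeff_sum W_def mm_def)
      also have "\<dots> = (\<Sum>i\<in>?B. \<Sum>j\<in>?B. if i = k0 - j then T i j * diag mm (W j) p else 0)"
      proof (intro sum.cong refl)
        fix i j
        show "T i j * coeff (cf (W j) (e - n*(i+j))) p = (if i = k0 - j then T i j * diag mm (W j) p else 0)"
        proof (cases "i = k0 - j")
          case True
          then have "e - n*(i+j) = m * int p" by (simp add: e_def)
          moreover have "nat (m * int p) = mm * p" using m by (simp add: mm_def nat_mult_distrib)
          ultimately show ?thesis using True m by (simp add: cf_def diag_def)
        next
          case False
          have "coeff (cf (W j) (e - n*(i+j))) p = 0"
          proof (rule ccontr)
            assume c: "coeff (cf (W j) (e - n*(i+j))) p \<noteq> 0"
            then have d0: "0 \<le> e - n*(i+j)" by (cases "e - n*(i+j) < 0") auto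
            with c have "coeff (fps_nth (W j) (nat (e - n*(i+j)))) p \<noteq> 0" by (simp add: cf_def)
            then have "nat (e - n*(i+j)) = mm * p" by (rule homogD[OF homW])
            then have "int (nat (e - n*(i+j))) = int (mm * p)" by simp
            then have "e - n*(i+j) = m * int p" using d0 m by (simp add: mm_def)
            then have "n * (i + j) = n * k0" unfolding e_def by linarith
            then have "i + j = k0" using n by (metis mult_cancel_left less_irrefl)
            with False show False by simp
          qed
          then show ?thesis using False by simp
        qed
      qed
      also have "\<dots> = (\<Sum>j\<in>?B. \<Sum>i\<in>?B. if i = k0 - j then T i j * diag mm (W j) p else 0)"
        by (rule sum.swap)
      also have "\<dots> = (\<Sum>j\<in>?B. if k0 - j \<in> ?B then T (k0 - j) j * diag mm (W j) p else 0)"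
        by (simp add: sum.delta)
      also have "\<dots> = (\<Sum>j\<in>?B. Q j * diag mm (W j) p)"
      proof (intro sum.cong refl)
        fix j assume j: "j \<in> ?B"
        show "(if k0 - j \<in> ?B then T (k0 - j) j * diag mm (W j) p else 0) = Q j * diag mm (W j) p"
        proof (cases "k0 - j \<in> ?B")
          case False
          then have "k0 - j < -R \<or> R + \<bar>e\<bar> < k0 - j" by auto
          then have "Q j = 0"
          proof
            assume "k0 - j < -R" then show ?thesis by (simp add: Q_def T_zero1)
          next
            assume "R + \<bar>e\<bar> < k0 - j"
            then have "j < -R" using k0 by simp
            then show ?thesis by (simp add: Q_def T_zero2)
          qed
          then show ?thesis using False by (simp only: if_False mult_zero_left)
        qed (simp add: Q_def)
      qed
      also have "\<dots> = (\<Sum>j\<in>{-R..k0+R}. Q j * diag mm (W j) p)"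
      proof (rule sum_int_interval_eq[where a="-R" and b="k0+R"])
        fix j assume "Q j * diag mm (W j) p \<noteq> 0"
        then have "Q j \<noteq> 0" by auto
        then show "-R \<le> j \<and> j \<le> k0 + R" by (rule Q0)
      qed (use k0 in auto)
      also have "\<dots> = diag mm F p" by (simp add: F_def diag_lin)
      finally show ?thesis by (simp add: e_def)
    qed

    have c2: "\<exists>p\<le>P. diag mm F p \<noteq> 0"
    proof (rule ccontr)
      assume "\<not> (\<exists>p\<le>P. diag mm F p \<noteq> 0)"
      then have z: "\<And>p. p \<le> P \<Longrightarrow> diag mm F p = 0" by auto
      have d0: "diag mm (F * W R) P = 0" by (rule diag_mult_zero[OF homF z])
      have "F * W R = (\<Sum>j\<in>{-R..k0+R}. fps_const [:Q j:] * W (j + R))"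
        by (simp add: F_def sum_distrib_right mult.assoc W_def sigma_w_add[OF mm])
      also have "\<dots> = (\<Sum>j\<in>{-R..k0+R}. fps_const [:Q j:] * (1 + fps_const [:0, 1:] * fps_X ^ mm) ^ nat (j + R))"
        by (intro sum.cong refl) (auto simp: W_def sigma_w_def)
      finally have "diag mm (F * W R) P = (\<Sum>j\<in>{-R..k0+R}. Q j * diag mm ((1 + fps_const [:0, 1:] * fps_X ^ mm) ^ nat (j + R)) P)"
        by (simp add: diag_lin)
      also have "\<dots> = (\<Sum>j\<in>{-R..k0+R}. if j = jt then Q jt else 0)"
      proof (intro sum.cong refl)
        fix j assume j: "j \<in> {-R..k0+R}"
        show "Q j * diag mm ((1 + fps_const [:0, 1:] * fps_X ^ mm) ^ nat (j + R)) P = (if j = jt then Q jt else 0)"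
        proof (cases "Q j = 0")
          case True
          then show ?thesis using jtS by (auto simp: S_def)
        next
          case False
          then have "j \<in> S" using j by (simp add: S_def)
          then have "j \<le> jt" by (rule jt_max)
          then have "nat (j + R) \<le> P \<and> (nat (j + R) = P \<longleftrightarrow> j = jt)" using j jtR by (auto simp: P_def)
          then show ?thesis by (auto simp: diag_Wpow[OF mm])
        qed
      qed
      also have "\<dots> = Q jt" using jtS by (simp add: S_def)
      finally have "Q jt = 0" using d0 by simp
      with jtS show False by (simp add: S_def)
    qed
    then obtain p where pP: "p \<le> P" and dnz: "diag mm F p \<noteq> 0" by blast
    have "fls_nth (zent r) (n*k0 + m * int p) \<noteq> 0" using dnz c1[of p] by auto
    then have "0 \<le> n*k0 + m * int p" using integ by (meson not_le)
    moreover have "m * int p \<le> m * int P" using pP m by simp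
    ultimately have ineq: "- k0 * n \<le> m * int P" by (simp add: algebra_simps)
    have "of_int (- k0 * n) \<le> (of_int (m * int P) :: rat)" using ineq by (simp only: of_int_le_iff)
    then have "of_int (- k0) * of_int n \<le> of_int m * (of_nat P :: rat)" by simp
    then show "of_int (-k0) \<le> r * of_nat P" using n
      by (simp add: rmn field_simps)
  qed
qed

end


lemma mult_entry:
  assumes "A \<in> carrier_mat N N" "B \<in> carrier_mat N N" "i < N" "j < N"
  shows "(A * B) $$ (i, j) = (\<Sum>l<N. A $$ (i, l) * B $$ (l, j))"
  using assms by (simp add: scalar_prod_def atLeast0LessThan)

lemma comm_ring_hom_comp: "comm_ring_hom f \<Longrightarrow> comm_ring_hom g \<Longrightarrow> comm_ring_hom (\<lambda>x. f (g x))"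
proof -
  assume f: "comm_ring_hom f" and g: "comm_ring_hom g"
  interpret F: comm_ring_hom f by (rule f)
  interpret G: comm_ring_hom g by (rule g)
  show ?thesis by unfold_locales (simp_all add: F.hom_add G.hom_add F.hom_mult G.hom_mult)
qed

lemma hom_incl_lambda: "comm_ring_hom (incl_lambda :: 'a::comm_ring_1 fls \<Rightarrow> 'a fls fls)"
proof -
  interpret gsub_hom "fls_const :: 'a \<Rightarrow> 'a fls" 1 "\<lambda>_. 1" by (rule gsub_hom_one[OF _ comm_ring_hom_fls_const]) simp
  show ?thesis unfolding incl_lambda_gsub by (rule gsub_comm_ring_hom)
qed

lemma incl_lambda_const: "incl_lambda (fls_const a) = fls_const (fls_const (a::'a::comm_ring_1))"
proof -
  interpret gsub_hom "fls_const :: 'a \<Rightarrow> 'a fls" 1 "\<lambda>_. 1" by (rule gsub_hom_one[OF _ comm_ring_hom_fls_const]) simp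
  show ?thesis unfolding incl_lambda_gsub by (rule gsub_const)
qed

lemma hom_lambda_subst: "comm_ring_hom (lambda_subst :: 'a::comm_ring_1 fls \<Rightarrow> 'a fls fls)"
proof -
  interpret gsub_hom "fls_const :: 'a \<Rightarrow> 'a fls" 1 "\<lambda>k. fps_const (lam k)" by (rule gsub_hom_lam)
  show ?thesis unfolding lambda_subst_gsub by (rule gsub_comm_ring_hom)
qed

lemma lambda_subst_const: "lambda_subst (fls_const a) = fls_const (fls_const (a::'a::comm_ring_1))"
proof -
  interpret gsub_hom "fls_const :: 'a \<Rightarrow> 'a fls" 1 "\<lambda>k. fps_const (lam k)" by (rule gsub_hom_lam)
  show ?thesis unfolding lambda_subst_gsub by (rule gsub_const)
qed

lemma hom_incl_r: "comm_ring_hom (incl_r r :: 'a::comm_ring_1 fls \<Rightarrow> 'a poly fls)"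
proof -
  obtain m n where q: "quotient_of r = (m, n)" by (cases "quotient_of r")
  interpret gsub_hom "\<lambda>a::'a. [:a:]" n "\<lambda>_. 1" by (rule gsub_hom_one[OF quotient_of_denom_pos[OF q] comm_ring_hom_pCons])
  show ?thesis unfolding incl_r_gsub[OF q] by (rule gsub_comm_ring_hom)
qed

lemma incl_r_const: "incl_r r (fls_const a) = fls_const [:a::'a::comm_ring_1:]"
proof -
  obtain m n where q: "quotient_of r = (m, n)" by (cases "quotient_of r")
  interpret gsub_hom "\<lambda>a::'a. [:a:]" n "\<lambda>_. 1" by (rule gsub_hom_one[OF quotient_of_denom_pos[OF q] comm_ring_hom_pCons])
  show ?thesis unfolding incl_r_gsub[OF q] by (rule gsub_const)
qed

lemma hom_sigma_r: "0 < r \<Longrightarrow> comm_ring_hom (sigma_r r :: 'a::comm_ring_1 fls \<Rightarrow> 'a poly fls)"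
proof -
  assume r: "0 < r"
  obtain m n where q: "quotient_of r = (m, n)" by (cases "quotient_of r")
  interpret gsub_hom "\<lambda>a::'a. [:a:]" n "sigma_w (nat m)" by (rule gsub_hom_sigma[OF q r])
  show ?thesis unfolding sigma_r_gsub[OF q] by (rule gsub_comm_ring_hom)
qed

lemma sigma_r_const: "0 < r \<Longrightarrow> sigma_r r (fls_const a) = fls_const [:a::'a::comm_ring_1:]"
proof -
  assume r: "0 < r"
  obtain m n where q: "quotient_of r = (m, n)" by (cases "quotient_of r")
  interpret gsub_hom "\<lambda>a::'a. [:a:]" n "sigma_w (nat m)" by (rule gsub_hom_sigma[OF q r])
  show ?thesis unfolding sigma_r_gsub[OF q] by (rule gsub_const)
qed

lemma hom_lam_const: "comm_ring_hom (\<lambda>a::'a::comm_ring_1. fls_const (fls_const a))"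
  by (rule comm_ring_hom_comp[OF comm_ring_hom_fls_const comm_ring_hom_fls_const])

lemma hom_u_const: "comm_ring_hom (\<lambda>a::'a::comm_ring_1. fls_const [:a:])"
  by (rule comm_ring_hom_comp[OF comm_ring_hom_fls_const comm_ring_hom_pCons])

lemma hmat_points:
  assumes G: "closed_subgroup_scheme_SL N I" and g: "g \<in> group_points N I fls_const UNIV"
  shows "map_mat incl_lambda (adj_mat g) * map_mat lambda_subst g
     \<in> group_points N I (\<lambda>a::'a::comm_ring_1. fls_const (fls_const a)) UNIV"
proof -
  interpret H: comm_ring_hom "incl_lambda :: 'a fls \<Rightarrow> 'a fls fls" by (rule hom_incl_lambda)
  have g1: "map_mat incl_lambda g \<in> group_points N I (\<lambda>a::'a. fls_const (fls_const a)) UNIV"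
    by (rule group_points_map[OF hom_incl_lambda g]) (simp add: incl_lambda_const)
  have g2: "map_mat lambda_subst g \<in> group_points N I (\<lambda>a::'a. fls_const (fls_const a)) UNIV"
    by (rule group_points_map[OF hom_lambda_subst g]) (simp add: lambda_subst_const)
  have "map_mat incl_lambda (adj_mat g) \<in> group_points N I (\<lambda>a::'a. fls_const (fls_const a)) UNIV"
    unfolding H.hom_adj_mat[symmetric] by (rule group_points_adj[OF G hom_lam_const g1])
  then show ?thesis by (rule group_points_mult[OF G hom_lam_const _ g2])
qed

lemma zmat_points:
  assumes G: "closed_subgroup_scheme_SL N I" and g: "g \<in> group_points N I fls_const UNIV" and r: "0 < r"
  shows "map_mat (incl_r r) (adj_mat g) * map_mat (sigma_r r) g
     \<in> group_points N I (\<lambda>a::'a::comm_ring_1. fls_const [:a:]) UNIV"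
proof -
  interpret H: comm_ring_hom "incl_r r :: 'a fls \<Rightarrow> 'a poly fls" by (rule hom_incl_r)
  have g1: "map_mat (incl_r r) g \<in> group_points N I (\<lambda>a::'a. fls_const [:a:]) UNIV"
    by (rule group_points_map[OF hom_incl_r g]) (simp add: incl_r_const)
  have g2: "map_mat (sigma_r r) g \<in> group_points N I (\<lambda>a::'a. fls_const [:a:]) UNIV"
    by (rule group_points_map[OF hom_sigma_r[OF r] g]) (simp add: sigma_r_const[OF r])
  have "map_mat (incl_r r) (adj_mat g) \<in> group_points N I (\<lambda>a::'a. fls_const [:a:]) UNIV"
    unfolding H.hom_adj_mat[symmetric] by (rule group_points_adj[OF G hom_u_const g1])
  then show ?thesis by (rule group_points_mult[OF G hom_u_const _ g2])
qed


lemma comm_ring_hom_fps_to_fls: "comm_ring_hom (fps_to_fls :: 'a::comm_ring_1 fps \<Rightarrow> 'a fls)"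
  by unfold_locales (auto simp: fls_times_fps_to_fls)

lemma integral_nth: "x \<in> fls_integral_part \<Longrightarrow> c < 0 \<Longrightarrow> fls_nth x c = 0"
  by (simp add: fls_integral_part_def)

lemma integral_sd: "x \<in> fls_integral_part \<Longrightarrow> 0 \<le> fls_subdegree x"
  by (cases "x = 0") (auto simp: fls_integral_part_def intro!: fls_subdegree_geI)

lemma adj_integral:
  assumes g: "g \<in> carrier_mat N N" and int: "\<And>i j. i < N \<Longrightarrow> j < N \<Longrightarrow> g $$ (i, j) \<in> fls_integral_part"
    and i: "i < N" and j: "j < N" and c: "c < 0"
  shows "fls_nth (adj_mat g $$ (i, j)) (c::int) = (0::'a::comm_ring_1)"
proof -
  interpret F: comm_ring_hom "fps_to_fls :: 'a fps \<Rightarrow> 'a fls" by (rule comm_ring_hom_fps_to_fls)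
  define g' where "g' = map_mat fls_regpart g"
  have "map_mat fps_to_fls g' = g"
    using g int by (intro eq_matI) (auto simp: g'_def integral_sd)
  then have "adj_mat g = map_mat fps_to_fls (adj_mat g')" by (metis F.hom_adj_mat)
  moreover have "adj_mat g' \<in> carrier_mat N N" using g by (intro adj_mat) (simp add: g'_def)
  ultimately have "adj_mat g $$ (i, j) = fps_to_fls (adj_mat g' $$ (i, j))" using i j by simp
  then show ?thesis using c by simp
qed

lemma main_pointwise:
  fixes g :: "'a::comm_ring_1 fls mat"
  assumes G: "closed_subgroup_scheme_SL N I" and g: "g \<in> group_points N I fls_const UNIV"
  shows "r_index N I g \<le> 0 \<longleftrightarrow>
     map_mat incl_lambda (adj_mat g) * map_mat lambda_subst g
        \<in> group_points N I (\<lambda>a. fls_const (fls_const a)) laurent_poly_power_series"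
proof -
  have gc: "g \<in> carrier_mat N N" using g by (simp add: group_points_def)
  have agc: "adj_mat g \<in> carrier_mat N N" by (rule adj_mat(1)[OF gc])
  define R where "R = (\<Sum>i<N. \<Sum>j<N. \<bar>fls_subdegree (adj_mat g $$ (i, j))\<bar> + \<bar>fls_subdegree (g $$ (i, j))\<bar>)"
  have bnd: "\<bar>fls_subdegree (adj_mat g $$ (i, j))\<bar> + \<bar>fls_subdegree (g $$ (i, j))\<bar> \<le> R" if "i < N" "j < N" for i j
  proof -
    have "\<bar>fls_subdegree (adj_mat g $$ (i, j))\<bar> + \<bar>fls_subdegree (g $$ (i, j))\<bar>
        \<le> (\<Sum>j<N. \<bar>fls_subdegree (adj_mat g $$ (i, j))\<bar> + \<bar>fls_subdegree (g $$ (i, j))\<bar>)"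
      using that by (intro member_le_sum) auto
    also have "\<dots> \<le> R" unfolding R_def using that by (intro member_le_sum) (auto intro: sum_nonneg)
    finally show ?thesis .
  qed
  define A where "A i0 = (\<lambda>l. adj_mat g $$ (i0, l))" for i0
  define B where "B j0 = (\<lambda>l. g $$ (l, j0))" for j0
  have E: "ent (A i0) (B j0) N R" if "i0 < N" "j0 < N" for i0 j0
  proof
    fix l c assume l: "l < N" and c: "c < -R"
    have "\<bar>fls_subdegree (adj_mat g $$ (i0, l))\<bar> \<le> R" using bnd[OF that(1) l] by simp
    then have "c < fls_subdegree (adj_mat g $$ (i0, l))" using c by simp
    then show "fls_nth (A i0 l) c = 0" by (simp add: A_def)
    have "\<bar>fls_subdegree (g $$ (l, j0))\<bar> \<le> R" using bnd[OF l that(2)] by simp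
    then have "c < fls_subdegree (g $$ (l, j0))" using c by simp
    then show "fls_nth (B j0 l) c = 0" by (simp add: B_def)
  qed
  define Tf where "Tf i0 j0 = ent.T (A i0) (B j0) N" for i0 j0
  let ?h = "map_mat incl_lambda (adj_mat g) * map_mat lambda_subst g"
  let ?z = "\<lambda>r. map_mat (incl_r r) (adj_mat g) * map_mat (sigma_r r) g"
  have hentry: "?h $$ (i0, j0) = ent.hent (A i0) (B j0) N" if "i0 < N" "j0 < N" for i0 j0
  proof -
    have "?h $$ (i0, j0) = (\<Sum>l<N. map_mat incl_lambda (adj_mat g) $$ (i0, l) * map_mat lambda_subst g $$ (l, j0))"
      by (rule mult_entry) (use that agc gc in auto)
    also have "\<dots> = ent.hent (A i0) (B j0) N"
      unfolding ent.hent_def[OF E[OF that]] using that agc gc by (simp add: A_def B_def)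
    finally show ?thesis .
  qed
  have zentry: "?z r $$ (i0, j0) = ent.zent (A i0) (B j0) N r" if "i0 < N" "j0 < N" for i0 j0 r
  proof -
    have "?z r $$ (i0, j0) = (\<Sum>l<N. map_mat (incl_r r) (adj_mat g) $$ (i0, l) * map_mat (sigma_r r) g $$ (l, j0))"
      by (rule mult_entry) (use that agc gc in auto)
    also have "\<dots> = ent.zent (A i0) (B j0) N r"
      unfolding ent.zent_def[OF E[OF that]] using that agc gc by (simp add: A_def B_def)
    finally show ?thesis .
  qed
  have hcoeff: "fls_nth (fls_nth (?h $$ (i0, j0)) k) j = Tf i0 j0 (k - j) j" if "i0 < N" "j0 < N" for i0 j0 k j
    using ent.hent_coeff[OF E[OF that]] hentry[OF that] by (simp add: Tf_def)
  have hLP: "?h \<in> group_points N I (\<lambda>a. fls_const (fls_const a)) laurent_poly_power_series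
      \<longleftrightarrow> (\<forall>i0<N. \<forall>j0<N. \<forall>i j. i + j < 0 \<longrightarrow> Tf i0 j0 i j = 0)"
  proof -
    have ent_iff: "?h $$ (i0, j0) \<in> laurent_poly_power_series \<longleftrightarrow> (\<forall>i j. i + j < 0 \<longrightarrow> Tf i0 j0 i j = 0)"
      if ij: "i0 < N" "j0 < N" for i0 j0
    proof -
      interpret En: ent "A i0" "B j0" N R by (rule E[OF ij])
      have fin: "finite {i. fls_nth (fls_nth (?h $$ (i0, j0)) k) i \<noteq> 0}" for k
      proof (rule finite_subset[of _ "{-R..k+R}"])
        show "{i. fls_nth (fls_nth (?h $$ (i0, j0)) k) i \<noteq> 0} \<subseteq> {-R..k+R}"
        proof
          fix i assume "i \<in> {i. fls_nth (fls_nth (?h $$ (i0, j0)) k) i \<noteq> 0}"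
          then have nz: "Tf i0 j0 (k - i) i \<noteq> 0" by (simp add: hcoeff[OF ij])
          then have "\<not> i < -R" using En.T_zero2 by (auto simp: Tf_def)
          moreover have "\<not> k - i < -R" using nz En.T_zero1 by (auto simp: Tf_def)
          ultimately show "i \<in> {-R..k+R}" by simp
        qed
      qed simp
      have "(\<forall>k<0. fls_nth (?h $$ (i0, j0)) k = 0) \<longleftrightarrow> (\<forall>i j. i + j < 0 \<longrightarrow> Tf i0 j0 i j = 0)"
      proof
        assume z: "\<forall>k<0. fls_nth (?h $$ (i0, j0)) k = 0"
        show "\<forall>i j. i + j < 0 \<longrightarrow> Tf i0 j0 i j = 0"
        proof (intro allI impI)
          fix i j :: int assume "i + j < 0"
          then have "fls_nth (fls_nth (?h $$ (i0, j0)) (i + j)) j = 0" using z by simp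
          then show "Tf i0 j0 i j = 0" by (simp add: hcoeff[OF ij])
        qed
      next
        assume z: "\<forall>i j. i + j < 0 \<longrightarrow> Tf i0 j0 i j = 0"
        show "\<forall>k<0. fls_nth (?h $$ (i0, j0)) k = 0"
        proof (intro allI impI fls_eqI)
          fix k j :: int assume "k < 0"
          then show "fls_nth (fls_nth (?h $$ (i0, j0)) k) j = fls_nth 0 j"
            using z by (simp add: hcoeff[OF ij])
        qed
      qed
      then show ?thesis using fin by (simp add: laurent_poly_power_series_def)
    qed
    show ?thesis
      using hmat_points[OF G g] ent_iff by (simp add: group_points_subring[of _ _ _ _ laurent_poly_power_series])
  qed
  have zI: "?z r \<in> group_points N I (\<lambda>a. fls_const [:a:]) fls_integral_part
      \<longleftrightarrow> (\<forall>i0<N. \<forall>j0<N. \<forall>e<0. fls_nth (ent.zent (A i0) (B j0) N r) e = 0)" if r: "0 < r" for r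
    using zmat_points[OF G g r] zentry group_points_subring[of "?z r" N I "\<lambda>a. fls_const [:a:]" fls_integral_part]
    by (auto simp: fls_integral_part_def)
  define S where "S = {r::rat. 0 < r \<and> ?z r \<in> group_points N I (\<lambda>a. fls_const [:a:]) fls_integral_part}"
  show ?thesis
  proof (cases "g \<in> group_points N I fls_const fls_integral_part")
    case True
    then have gint: "\<And>i j. i < N \<Longrightarrow> j < N \<Longrightarrow> g $$ (i, j) \<in> fls_integral_part"
      by (simp add: group_points_def)
    have "Tf i0 j0 i j = 0" if "i0 < N" "j0 < N" "i + j < 0" for i0 j0 i j
    proof -
      have "fls_nth (A i0 l) i * fls_nth (B j0 l) j = 0" if l: "l < N" for l
      proof (cases "i < 0")
        case True
        then show ?thesis using adj_integral[OF gc gint \<open>i0 < N\<close> l True] by (simp add: A_def)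
      next
        case False
        then have "j < 0" using \<open>i + j < 0\<close> by simp
        then show ?thesis using integral_nth[OF gint[OF l \<open>j0 < N\<close>]] by (simp add: B_def)
      qed
      then show ?thesis unfolding Tf_def ent.T_def[OF E[OF that(1,2)]] by simp
    qed
    then show ?thesis using True hLP by (simp add: r_index_def)
  next
    case False
    then have rI: "r_index N I g = Inf ((\<lambda>r. ereal (real_of_rat r)) ` S)"
      by (simp add: r_index_def S_def)
    show ?thesis
    proof
      assume le: "r_index N I g \<le> 0"
      show "?h \<in> group_points N I (\<lambda>a. fls_const (fls_const a)) laurent_poly_power_series"
      proof (rule ccontr)
        assume "\<not> ?thesis"
        then obtain i0 j0 i j where ij: "i0 < N" "j0 < N" and ij0: "i + j < 0" and nz: "Tf i0 j0 i j \<noteq> 0"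
          using hLP by blast
        interpret En: ent "A i0" "B j0" N R by (rule E[OF ij])
        have nz': "En.T ((i + j) - j) j \<noteq> 0" using nz by (simp add: Tf_def)
        obtain P :: nat where P: "\<And>r. 0 < r \<Longrightarrow> (\<forall>e<0. fls_nth (En.zent r) e = 0) \<Longrightarrow> of_int (- (i + j)) \<le> r * of_nat P"
          using En.backward[OF ij0 nz'] by blast
        define P' where "P' = max 1 P"
        define c where "c = real_of_int (- (i + j)) / real P'"
        have P'pos: "0 < real P'" by (simp add: P'_def)
        have cpos: "0 < c" using ij0 P'pos by (simp add: c_def)
        have "ereal c \<le> Inf ((\<lambda>r. ereal (real_of_rat r)) ` S)"
        proof (rule Inf_greatest)
          fix x assume "x \<in> (\<lambda>r. ereal (real_of_rat r)) ` S"
          then obtain r where rS: "r \<in> S" and x: "x = ereal (real_of_rat r)" by blast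
          have r: "0 < r" using rS by (simp add: S_def)
          have "\<forall>e<0. fls_nth (En.zent r) e = 0" using rS zI[OF r] ij by (simp add: S_def)
          then have "of_int (- (i + j)) \<le> r * of_nat P" by (rule P[OF r])
          also have "\<dots> \<le> r * of_nat P'" using r by (intro mult_left_mono) (auto simp: P'_def)
          finally have "real_of_rat (of_int (- (i + j))) \<le> real_of_rat (r * of_nat P')" by (simp only: of_rat_less_eq)
          then have "real_of_int (- (i + j)) \<le> real_of_rat r * real P'" by (simp add: of_rat_mult of_rat_diff of_rat_minus of_rat_of_int_eq)
          then have "c \<le> real_of_rat r" using P'pos by (simp add: c_def divide_le_eq mult.commute)
          then show "ereal c \<le> x" by (simp add: x)
        qed
        with le rI have "ereal c \<le> 0" by (metis order_trans)
        with cpos show False by simp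
      qed
    next
      assume "?h \<in> group_points N I (\<lambda>a. fls_const (fls_const a)) laurent_poly_power_series"
      then have T0: "\<And>i0 j0 i j. i0 < N \<Longrightarrow> j0 < N \<Longrightarrow> i + j < 0 \<Longrightarrow> Tf i0 j0 i j = 0" using hLP by blast
      have allS: "r \<in> S" if r: "0 < r" for r
      proof -
        have "\<forall>i0<N. \<forall>j0<N. \<forall>e<0. fls_nth (ent.zent (A i0) (B j0) N r) e = 0"
        proof (intro allI impI)
          fix i0 j0 e assume ij: "i0 < N" "j0 < N" and e: "(e::int) < 0"
          interpret En: ent "A i0" "B j0" N R by (rule E[OF ij])
          show "fls_nth (En.zent r) e = 0"
            by (rule En.forward[OF _ r e]) (use T0[OF ij] in \<open>simp add: Tf_def\<close>)
        qed
        then show ?thesis using zI[OF r] r by (simp add: S_def)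
      qed
      show "r_index N I g \<le> 0" unfolding rI Inf_le_iff
      proof (intro allI impI)
        fix y :: ereal assume y: "0 < y"
        show "\<exists>a\<in>(\<lambda>r. ereal (real_of_rat r)) ` S. a < y"
        proof (cases y)
          case (real x)
          then have "0 < x" using y by simp
          then obtain q :: rat where q: "0 < real_of_rat q" "real_of_rat q < x"
            using of_rat_dense by blast
          have "0 < q" using q(1) by simp
          then show ?thesis using allS q real by (intro bexI[of _ "ereal (real_of_rat q)"]) auto
        next
          case PInf
          then show ?thesis using allS[of 1] by (intro bexI[of _ "ereal (real_of_rat 1)"]) auto
        next
          case MInf
          then show ?thesis using y by simp
        qed
      qed
    qed
  qed
qed

theorem mainTheorem13:
  fixes N :: nat and I :: "('a::comm_ring_1) mpoly set"
  assumes "closed_subgroup_scheme_SL N I"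
  shows "{g \<in> group_points N I fls_const UNIV. r_index N I g \<le> 0} =
         {g \<in> group_points N I fls_const UNIV.
            map_mat incl_lambda (adj_mat g) * map_mat lambda_subst g
              \<in> group_points N I (\<lambda>a. fls_const (fls_const a)) laurent_poly_power_series}"
  using main_pointwise[OF assms] by blast


end
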